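(* Let $\delta\in\{0,1\}$, $l>0$, let $g\geq 0$ and $n\geq 0$ be integers, let $a,b\in\frac12\mathbb{Z}$ with $2b\equiv 2\delta a \pmod 2$, and let $\mu\neq\emptyset$ be a partition with $\|\mu\|=2b$. Then the subspace of the moduli space $\mathcal{M}_{g,n}(\mathbb{T}M_\delta,(a,b),\mu)$ parametrizing simple tropical curves has dimension $|\mu|+g-1+n$.
   Context: For $\delta\in\{0,1\}$ and $l>0$ let $\varphi_\delta:\mathbb{R}^2\to\mathbb{R}^2$, $\varphi_\delta(x,y)=(x+l,\delta x-y)$. The tropical Möbius strip $\mathbb{T}M_\delta$ is the quotient $\mathbb{R}^2/\langle\varphi_\delta\rangle$ with the integral affine structure induced by $\mathbb{Z}^2\subset\mathbb{R}^2$; it projects onto the tropical elliptic curve $\mathbb{T}E=\mathbb{R}/l\mathbb{Z}$ via $(x,y)\mapsto x$. An abstract tropical curve is a finite metric graph $\Gamma$ whose edges are bounded edges (finite length) or ends (unbounded, infinite length, adjacent to a single vertex); its genus is $g=1-\chi(\Gamma)$. A parametrized tropical curve is a map $h:\Gamma\to\mathbb{T}M_\delta$ that is affine on each edge with integer slope (derivative in $\mathbb{Z}^2$ in the affine charts coming from $\mathbb{R}^2$) and is balanced: at each vertex the sum of outgoing slopes is $0$. The weight of an edge is the integral length of its slope. The curve is simple if $\Gamma$ is trivalent and $h$ is an immersion. The tropical homology group is $H_{1,1}(\mathbb{T}M_\delta,\mathbb{Z})=\{aE+bF: a,b\in\frac12\mathbb{Z},\ 2b\equiv 2\delta a \bmod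 2\}$, where $F$ is the class of a fiber of the projection to $\mathbb{T}E$ and $E$ the class of the boundary at infinity; a curve has class $aE+bF$ when its ends (which are vertical rays) have total weight $2b$ and its tropical intersection number with a fiber is $2a$. For a partition $\mu$ written as multiplicities $(\mu_i)_{i\ge1}$, $|\mu|=\sum_i\mu_i$ and $\|\mu\|=\sum_i i\mu_i$; a curve has tangency profile $\mu$ if it has exactly $\mu_i$ ends of weight $i$ for each $i$. $\mathcal{M}_{g,n}(\mathbb{T}M_\delta,(a,b),\mu)$ denotes the moduli space of genus $g$ parametrized tropical curves in $\mathbb{T}M_\delta$ of class $aE+bF$ with tangency profile $\mu$ and $n$ marked points on $\Gamma$; it is a polyhedral complex whose cells correspond to combinatorial types (the graph together with the slopes of $h$), a curve in a cell being parametrized by its edge lengths (including positions of marked points) and the image of a vertex. *)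

theory Defs
  imports "HOL-Analysis.Analysis" "HOL-Library.Multiset"
begin

text \<open>Points of a parameter space are functions nat => real (only finitely many
coordinates are used; the others are pinned to 0).\<close>

definition aff_indep_fam :: "(nat \<Rightarrow> nat \<Rightarrow> real) \<Rightarrow> nat \<Rightarrow> bool" where
  "aff_indep_fam x d \<longleftrightarrow>
     (\<forall>c::nat \<Rightarrow> real. (\<forall>j. (\<Sum>i\<in>{1..d}. c i * (x i j - x 0 j)) = 0)
        \<longrightarrow> (\<forall>i\<in>{1..d}. c i = 0))"

definition has_aff_dim :: "(nat \<Rightarrow> real) set \<Rightarrow> nat \<Rightarrow> bool" where
  "has_aff_dim S d \<longleftrightarrow>
     (\<exists>x. (\<forall>i\<le>d. x i \<in> S) \<and> aff_indep_fam x d) \<and>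
     \<not> (\<exists>x. (\<forall>i\<le>Suc d. x i \<in> S) \<and> aff_indep_fam x (Suc d))"

definition phi :: "int \<Rightarrow> real \<Rightarrow> real \<times> real \<Rightarrow> real \<times> real" where
  "phi \<delta> l p = (fst p + l, of_int \<delta> * fst p - snd p)"

definition phi_inv :: "int \<Rightarrow> real \<Rightarrow> real \<times> real \<Rightarrow> real \<times> real" where
  "phi_inv \<delta> l p = (fst p - l, of_int \<delta> * (fst p - l) - snd p)"

definition phi_pow :: "int \<Rightarrow> real \<Rightarrow> int \<Rightarrow> real \<times> real \<Rightarrow> real \<times> real" where
  "phi_pow \<delta> l k = (if 0 \<le> k then phi \<delta> l ^^ nat k else phi_inv \<delta> l ^^ nat (- k))"

text \<open>Linear part of phi (an involution) acting on integer slopes, and of phi^k.\<close>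

definition dphi :: "int \<Rightarrow> int \<times> int \<Rightarrow> int \<times> int" where
  "dphi \<delta> s = (fst s, \<delta> * fst s - snd s)"

definition dphi_pow :: "int \<Rightarrow> int \<Rightarrow> int \<times> int \<Rightarrow> int \<times> int" where
  "dphi_pow \<delta> k s = (if even k then s else dphi \<delta> s)"

text \<open>A bounded edge (u, w, s, k): an edge from u to w; given lifts P_u, P_w in R^2 of the
  images of u and w, the edge is the segment from P_u with slope s (in the chart at P_u)
  of length L ending at phi^k(P_w), i.e. P_u + L s = phi^k(P_w).  Its outgoing slope at w,
  in the chart at P_w, is - dphi^k s.
  An end (u, c): an end (vertical ray) adjacent to u with slope (0, c); its weight is |c|.
  A marked point (True, e) lies on bounded edge e, (False, e) lies on end e.\<close>

record ttype =
  tnv :: nat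
  tedges :: "(nat \<times> nat \<times> (int \<times> int) \<times> int) list"
  tends :: "(nat \<times> int) list"
  tmarks :: "(bool \<times> nat) list"

definition out_slopes :: "int \<Rightarrow> ttype \<Rightarrow> nat \<Rightarrow> (int \<times> int) list" where
  "out_slopes \<delta> T v =
     concat (map (\<lambda>(u, w, s, k).
        (if u = v then [s] else []) @
        (if w = v then [(- fst (dphi_pow \<delta> k s), - snd (dphi_pow \<delta> k s))] else []))
       (tedges T))
     @ map (\<lambda>(u, c). (0, c)) (filter (\<lambda>(u, c). u = v) (tends T))"

definition same_direction :: "int \<times> int \<Rightarrow> int \<times> int \<Rightarrow> bool" where
  "same_direction s t \<longleftrightarrow>
     fst s * snd t - snd s * fst t = 0 \<and> fst s * fst t + snd s * snd t > 0"

definition adj :: "ttype \<Rightarrow> (nat \<times> nat) set" where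
  "adj T = {(u, w). \<exists>s k. (u, w, s, k) \<in> set (tedges T)}
         \<union> {(w, u). \<exists>s k. (u, w, s, k) \<in> set (tedges T)}"

definition well_formed :: "ttype \<Rightarrow> bool" where
  "well_formed T \<longleftrightarrow>
     (\<forall>(u, w, s, k) \<in> set (tedges T). u < tnv T \<and> w < tnv T) \<and>
     (\<forall>(u, c) \<in> set (tends T). u < tnv T) \<and>
     (\<forall>(b, e) \<in> set (tmarks T). if b then e < length (tedges T) else e < length (tends T)) \<and>
     0 < tnv T \<and>
     (\<forall>u < tnv T. \<forall>v < tnv T. (u, v) \<in> (adj T)\<^sup>*)"

text \<open>Genus g = 1 - chi(Gamma) = 1 - #vertices + #bounded edges.\<close>
definition genus :: "ttype \<Rightarrow> int" where
  "genus T = 1 - int (tnv T) + int (length (tedges T))"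

definition balanced :: "int \<Rightarrow> ttype \<Rightarrow> bool" where
  "balanced \<delta> T \<longleftrightarrow> (\<forall>v < tnv T.
     sum_list (map fst (out_slopes \<delta> T v)) = 0 \<and> sum_list (map snd (out_slopes \<delta> T v)) = 0)"

definition trivalent :: "int \<Rightarrow> ttype \<Rightarrow> bool" where
  "trivalent \<delta> T \<longleftrightarrow> (\<forall>v < tnv T. length (out_slopes \<delta> T v) = 3)"

text \<open>h is an immersion (locally injective): no edge is contracted and at every vertex
no two outgoing edge germs point in the same direction.\<close>
definition immersive :: "int \<Rightarrow> ttype \<Rightarrow> bool" where
  "immersive \<delta> T \<longleftrightarrow>
     (\<forall>(u, w, s, k) \<in> set (tedges T). s \<noteq> (0, 0)) \<and>
     (\<forall>(u, c) \<in> set (tends T). c \<noteq> 0) \<and>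
     (\<forall>v < tnv T. \<forall>i < length (out_slopes \<delta> T v). \<forall>j < length (out_slopes \<delta> T v).
        i \<noteq> j \<longrightarrow> \<not> same_direction (out_slopes \<delta> T v ! i) (out_slopes \<delta> T v ! j))"

definition end_weights :: "ttype \<Rightarrow> nat multiset" where
  "end_weights T = mset (map (\<lambda>(u, c). nat \<bar>c\<bar>) (tends T))"

definition simple_type :: "int \<Rightarrow> nat \<Rightarrow> nat \<Rightarrow> real \<Rightarrow> nat multiset \<Rightarrow> ttype \<Rightarrow> bool" where
  "simple_type \<delta> g n b \<mu> T \<longleftrightarrow>
     well_formed T \<and> balanced \<delta> T \<and> trivalent \<delta> T \<and> immersive \<delta> T \<and>
     genus T = int g \<and> length (tmarks T) = n \<and>
     real (\<Sum>(u, c) \<leftarrow> tends T. nat \<bar>c\<bar>) = 2 * b \<and>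
     end_weights T = \<mu>"

text \<open>Coordinates of a parameter point X: lift of vertex v is (X(2v), X(2v+1));
length of bounded edge e is X(2 tnv + e); position of marked point j (distance from the
first vertex of its edge) is X(2 tnv + #edges + j); all other coordinates are 0.\<close>

definition vpos :: "ttype \<Rightarrow> (nat \<Rightarrow> real) \<Rightarrow> nat \<Rightarrow> real \<times> real" where
  "vpos T X v = (X (2 * v), X (2 * v + 1))"

definition elen :: "ttype \<Rightarrow> (nat \<Rightarrow> real) \<Rightarrow> nat \<Rightarrow> real" where
  "elen T X e = X (2 * tnv T + e)"

definition mpos :: "ttype \<Rightarrow> (nat \<Rightarrow> real) \<Rightarrow> nat \<Rightarrow> real" where
  "mpos T X j = X (2 * tnv T + length (tedges T) + j)"

definition ncoord :: "ttype \<Rightarrow> nat" where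
  "ncoord T = 2 * tnv T + length (tedges T) + length (tmarks T)"

text \<open>Tropical intersection number with the fiber over x = c (for c generic, i.e. not the
x-coordinate of the image of a vertex): each crossing of an edge of slope s with the fiber
contributes |det(s,(0,1))| = |s_1|.\<close>
definition fiber_intersection :: "real \<Rightarrow> ttype \<Rightarrow> (nat \<Rightarrow> real) \<Rightarrow> real \<Rightarrow> real" where
  "fiber_intersection l T X c =
     (\<Sum>e < length (tedges T).
        (case tedges T ! e of (u, w, s, k) \<Rightarrow>
          of_int \<bar>fst s\<bar> * real (card {m::int.
             c + of_int m * l \<in> {min (fst (vpos T X u)) (fst (vpos T X u) + elen T X e * of_int (fst s))
                              <..< max (fst (vpos T X u)) (fst (vpos T X u) + elen T X e * of_int (fst s))}})))"

definition cell :: "int \<Rightarrow> real \<Rightarrow> real \<Rightarrow> ttype \<Rightarrow> (nat \<Rightarrow> real) set" where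
  "cell \<delta> l a T = {X.
     (\<forall>i. ncoord T \<le> i \<longrightarrow> X i = 0) \<and>
     (\<forall>e < length (tedges T). case tedges T ! e of (u, w, s, k) \<Rightarrow>
        0 < elen T X e \<and>
        (fst (vpos T X u) + elen T X e * of_int (fst s),
         snd (vpos T X u) + elen T X e * of_int (snd s)) = phi_pow \<delta> l k (vpos T X w)) \<and>
     (\<forall>j < length (tmarks T). case tmarks T ! j of (bd, e) \<Rightarrow>
        0 \<le> mpos T X j \<and> (bd \<longrightarrow> mpos T X j \<le> elen T X e)) \<and>
     (\<forall>c. (\<forall>v < tnv T. \<forall>m::int. c \<noteq> fst (vpos T X v) + of_int m * l) \<longrightarrow>
        fiber_intersection l T X c = 2 * a)}"

definition simple_locus_nonempty ::
  "int \<Rightarrow> real \<Rightarrow> nat \<Rightarrow> nat \<Rightarrow> real \<Rightarrow> real \<Rightarrow> nat multiset \<Rightarrow> bool" where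
  "simple_locus_nonempty \<delta> l g n a b \<mu> \<longleftrightarrow>
     (\<exists>T. simple_type \<delta> g n b \<mu> T \<and> cell \<delta> l a T \<noteq> {})"

definition simple_locus_has_dim ::
  "int \<Rightarrow> real \<Rightarrow> nat \<Rightarrow> nat \<Rightarrow> real \<Rightarrow> real \<Rightarrow> nat multiset \<Rightarrow> nat \<Rightarrow> bool" where
  "simple_locus_has_dim \<delta> l g n a b \<mu> d \<longleftrightarrow>
     (\<exists>T. simple_type \<delta> g n b \<mu> T \<and> has_aff_dim (cell \<delta> l a T) d) \<and>
     (\<forall>T d'. simple_type \<delta> g n b \<mu> T \<and> has_aff_dim (cell \<delta> l a T) d' \<longrightarrow> d' \<le> d)"

end

theory Submission
  imports Defs "HOL-Library.Function_Algebras"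
begin


definition fam_indep :: "(nat \<Rightarrow> nat \<Rightarrow> real) \<Rightarrow> nat \<Rightarrow> bool" where
  "fam_indep b k \<longleftrightarrow> (\<forall>c. (\<forall>j. (\<Sum>i<k. c i * b i j) = 0) \<longrightarrow> (\<forall>i<k. c i = 0))"

definition ev :: "nat \<Rightarrow> nat \<Rightarrow> real" where "ev q = (\<lambda>j. if j = q then 1 else 0)"

definition ipN :: "nat \<Rightarrow> (nat \<Rightarrow> real) \<Rightarrow> (nat \<Rightarrow> real) \<Rightarrow> real" where
  "ipN N f g = (\<Sum>j<N. f j * g j)"

lemma sum_fun_apply: "(\<Sum>i\<in>A. f i) (j::'b) = (\<Sum>i\<in>A. (f i j :: real))"
  by (induction A rule: infinite_finite_induct) auto

interpretation FV: vector_space "\<lambda>(c::real) (f::nat\<Rightarrow>real). (\<lambda>i. c * f i)"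
  by unfold_locales (auto simp: fun_eq_iff algebra_simps)


lemma fam_indep_inj: assumes "fam_indep b k" shows "inj_on b {..<k}"
proof (rule inj_onI, rule ccontr)
  fix x y assume xy: "x \<in> {..<k}" "y \<in> {..<k}" "b x = b y" "x \<noteq> y"
  define c where "c = (\<lambda>i. if i = x then (1::real) else if i = y then -1 else 0)"
  have "\<forall>j. (\<Sum>i<k. c i * b i j) = 0"
  proof
    fix j
    have "(\<Sum>i<k. c i * b i j) = (\<Sum>i\<in>{x,y}. c i * b i j)"
      by (rule sum.mono_neutral_right) (use xy in \<open>auto simp: c_def\<close>)
    also have "\<dots> = 0" using xy by (simp add: c_def)
    finally show "(\<Sum>i<k. c i * b i j) = 0" .
  qed
  then have "c x = 0" using assms xy(1) unfolding fam_indep_def by blast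
  then show False by (simp add: c_def)
qed


lemma sum_delta_mult[simp]: "(\<Sum>q\<in>A. f q * (if i = q then (1::real) else 0)) = (if i \<in> A then f i else 0)" if "finite A"
proof -
  have "(\<Sum>q\<in>A. f q * (if i = q then (1::real) else 0)) = (\<Sum>q\<in>A. if i = q then f q else 0)"
    by (rule sum.cong) auto
  then show ?thesis using that by (simp add: sum.delta)
qed

lemma sum_delta_mult'[simp]: "(\<Sum>q\<in>A. (if i = q then (1::real) else 0) * f q) = (if i \<in> A then f i else 0)" if "finite A"
proof -
  have "(\<Sum>q\<in>A. (if i = q then (1::real) else 0) * f q) = (\<Sum>q\<in>A. if i = q then f q else 0)"
    by (rule sum.cong) auto
  then show ?thesis using that by (simp add: sum.delta)
qed

lemma in_span_W:
  assumes "\<forall>j\<ge>N. x j = 0"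
  shows "x \<in> FV.span (ev ` {..<N})"
proof -
  have "x = (\<Sum>q<N. (\<lambda>i. x q * ev q i))"
  proof
    fix i show "x i = (\<Sum>q<N. (\<lambda>i. x q * ev q i)) i"
      using assms by (cases "i < N") (auto simp: sum_fun_apply ev_def not_less)
  qed
  also have "\<dots> \<in> FV.span (ev ` {..<N})"
    by (intro FV.span_sum FV.span_scale FV.span_base) auto
  finally show ?thesis .
qed


lemma steinitz:
  assumes "fam_indep z k" and "\<forall>i<k. \<forall>j\<ge>N. z i j = 0"
  shows "k \<le> N"
proof -
  have inj: "inj_on z {..<k}" by (rule fam_indep_inj[OF assms(1)])
  have ind: "FV.independent (z ` {..<k})"
  proof
    assume "FV.dependent (z ` {..<k})"
    then obtain u where u: "\<exists>v\<in>z ` {..<k}. u v \<noteq> 0"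
        "(\<Sum>v\<in>z ` {..<k}. (\<lambda>i. u v * v i)) = 0"
      using FV.dependent_finite[of "z ` {..<k}"] by auto
    have "(\<Sum>v\<in>z ` {..<k}. (\<lambda>i. u v * v i)) = (\<Sum>q<k. (\<lambda>i. u (z q) * z q i))"
      by (subst sum.reindex[OF inj]) simp
    with u(2) have "\<forall>j. (\<Sum>q<k. u (z q) * z q j) = 0"
      by (auto simp: fun_eq_iff sum_fun_apply)
    then have "\<forall>q<k. u (z q) = 0" using assms(1) unfolding fam_indep_def
      by (elim allE[of _ "\<lambda>q. u (z q)"]) simp
    with u(1) show False by auto
  qed
  have "z ` {..<k} \<subseteq> FV.span (ev ` {..<N})" using assms(2) in_span_W by blast
  from FV.independent_span_bound[OF _ ind this] have "card (z ` {..<k}) \<le> card (ev ` {..<N})" by simp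
  also have "\<dots> \<le> N" using card_image_le[of "{..<N}" ev] by simp
  finally show ?thesis using card_image[OF inj] by simp
qed


lemma fam_indep_mono: assumes "fam_indep b k" "k' \<le> k" shows "fam_indep b k'"
  unfolding fam_indep_def
proof (intro allI impI)
  fix c i assume h: "\<forall>j. (\<Sum>i<k'. c i * b i j) = 0" and i: "i < k'"
  define c' where "c' = (\<lambda>i. if i < k' then c i else 0)"
  have "\<forall>j. (\<Sum>i<k. c' i * b i j) = 0"
  proof
    fix j
    have "(\<Sum>i<k. c' i * b i j) = (\<Sum>i<k'. c' i * b i j)"
      by (rule sum.mono_neutral_right) (use assms(2) in \<open>auto simp: c'_def\<close>)
    also have "\<dots> = (\<Sum>i<k'. c i * b i j)" by (rule sum.cong) (auto simp: c'_def)
    finally show "(\<Sum>i<k. c' i * b i j) = 0" using h by simp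
  qed
  then have "c' i = 0" using assms i unfolding fam_indep_def by (elim allE[of _ c']) auto
  then show "c i = 0" using i by (simp add: c'_def)
qed

lemma elim_step:
  fixes b :: "nat \<Rightarrow> nat \<Rightarrow> real" and f :: "(nat \<Rightarrow> real) \<Rightarrow> real"
  assumes ind: "fam_indep b k" and p: "p < k" and fp: "f (b p) \<noteq> 0"
  defines "\<tau> \<equiv> (\<lambda>i. if i = p then k - 1 else i)"
  defines "b' \<equiv> (\<lambda>i j. b (\<tau> i) j - (f (b (\<tau> i)) / f (b p)) * b p j)"
  shows "fam_indep b' (k - 1)"
  unfolding fam_indep_def
proof (intro allI impI)
  fix c i assume h: "\<forall>j. (\<Sum>i<k-1. c i * b' i j) = 0" and i: "i < k - 1"
  define \<sigma> where "\<sigma> = (\<lambda>q. if q = k - 1 then p else q)"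
  define t where "t = (\<lambda>i. f (b (\<tau> i)) / f (b p))"
  define C where "C = (\<lambda>q. if q = p then - (\<Sum>i<k-1. c i * t i) else c (\<sigma> q))"
  have bij: "bij_betw \<tau> {..<k-1} ({..<k} - {p})"
  proof (rule bij_betw_imageI)
    show "inj_on \<tau> {..<k - 1}" by (rule inj_onI) (auto simp: \<tau>_def split: if_splits)
    show "\<tau> ` {..<k - 1} = {..<k} - {p}"
    proof
      show "\<tau> ` {..<k - 1} \<subseteq> {..<k} - {p}" using p by (auto simp: \<tau>_def)
      show "{..<k} - {p} \<subseteq> \<tau> ` {..<k - 1}"
      proof
        fix q assume q: "q \<in> {..<k} - {p}"
        show "q \<in> \<tau> ` {..<k - 1}"
        proof (cases "q = k - 1")
          case True
          then have "\<tau> p = q" "p < k - 1" using p q by (auto simp: \<tau>_def)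
          then show ?thesis by force
        next
          case False
          then have "\<tau> q = q" "q < k - 1" using q by (auto simp: \<tau>_def)
          then show ?thesis by force
        qed
      qed
    qed
  qed
  have st: "\<sigma> (\<tau> i) = i" if "i < k - 1" for i using that by (auto simp: \<sigma>_def \<tau>_def)
  have tp: "\<tau> i \<noteq> p" if "i < k - 1" for i using that p by (auto simp: \<tau>_def)
  have "\<forall>j. (\<Sum>q<k. C q * b q j) = 0"
  proof
    fix j
    have "(\<Sum>q<k. C q * b q j) = C p * b p j + (\<Sum>q\<in>{..<k} - {p}. C q * b q j)"
      using p by (subst sum.remove[of _ p]) auto
    also have "(\<Sum>q\<in>{..<k} - {p}. C q * b q j) = (\<Sum>i<k-1. C (\<tau> i) * b (\<tau> i) j)"
      by (rule sum.reindex_bij_betw[OF bij, symmetric])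
    also have "\<dots> = (\<Sum>i<k-1. c i * b (\<tau> i) j)"
      by (rule sum.cong) (auto simp: C_def st tp)
    also have "C p * b p j = - (\<Sum>i<k-1. c i * t i) * b p j" by (simp add: C_def)
    finally have "(\<Sum>q<k. C q * b q j) = (\<Sum>i<k-1. c i * b (\<tau> i) j) - (\<Sum>i<k-1. c i * t i) * b p j"
      by simp
    also have "\<dots> = (\<Sum>i<k-1. c i * b (\<tau> i) j - (c i * t i) * b p j)"
      by (simp add: sum_subtractf sum_distrib_right)
    also have "\<dots> = (\<Sum>i<k-1. c i * b' i j)"
      by (rule sum.cong) (auto simp: b'_def t_def algebra_simps)
    finally show "(\<Sum>q<k. C q * b q j) = 0" using h by simp
  qed
  then have "\<forall>q<k. C q = 0" using ind unfolding fam_indep_def by (elim allE[of _ C]) auto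
  moreover have "\<tau> i < k" using i by (auto simp: \<tau>_def)
  ultimately have "C (\<tau> i) = 0" by blast
  then show "c i = 0" using st[OF i] tp[OF i] by (simp add: C_def)
qed


lemma ipN_lin: "ipN N r (\<lambda>j. x j - t * y j) = ipN N r x - t * ipN N r y"
  by (simp add: ipN_def algebra_simps sum_subtractf sum_distrib_left)

lemma lower:
  fixes r :: "nat \<Rightarrow> nat \<Rightarrow> real"
  shows "\<exists>b. fam_indep b (N - m) \<and> (\<forall>i<N-m. \<forall>j\<ge>N. b i j = 0) \<and>
             (\<forall>i<N-m. \<forall>q<m. ipN N (r q) (b i) = 0)"
proof (induction m)
  case 0
  have "fam_indep ev N" unfolding fam_indep_def
  proof (intro allI impI)
    fix c i assume h: "\<forall>j. (\<Sum>i<N. c i * ev i j) = 0" and i: "i < N"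
    have "(\<Sum>q<N. c q * ev q i) = c i" using i by (simp add: ev_def eq_commute[of _ i])
    with h show "c i = 0" by simp
  qed
  moreover have "\<forall>i<N. \<forall>j\<ge>N. ev i j = 0" by (auto simp: ev_def)
  ultimately show ?case by (intro exI[of _ ev]) auto
next
  case (Suc m)
  then obtain b where b: "fam_indep b (N - m)" "\<forall>i<N-m. \<forall>j\<ge>N. b i j = 0"
    "\<forall>i<N-m. \<forall>q<m. ipN N (r q) (b i) = 0" by blast
  let ?k = "N - m"
  let ?f = "ipN N (r m)"
  show ?case
  proof (cases "\<forall>i<?k. ?f (b i) = 0")
    case True
    have "fam_indep b (N - Suc m)" by (rule fam_indep_mono[OF b(1)]) simp
    then show ?thesis using b True by (intro exI[of _ b]) (auto simp: less_Suc_eq)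
  next
    case False
    then obtain p where p: "p < ?k" "?f (b p) \<noteq> 0" by blast
    define \<tau> where "\<tau> = (\<lambda>i. if i = p then ?k - 1 else i)"
    define b' where "b' = (\<lambda>i j. b (\<tau> i) j - (?f (b (\<tau> i)) / ?f (b p)) * b p j)"
    have "fam_indep b' (?k - 1)" unfolding b'_def \<tau>_def by (rule elim_step[where f="?f", OF b(1) p])
    moreover have "N - Suc m = ?k - 1" by simp
    moreover have tk: "\<tau> i < ?k" if "i < ?k - 1" for i using that p by (auto simp: \<tau>_def)
    moreover have "\<forall>i<?k-1. \<forall>j\<ge>N. b' i j = 0" using b(2) tk p by (auto simp: b'_def)
    moreover have "\<forall>i<?k-1. \<forall>q<Suc m. ipN N (r q) (b' i) = 0"
    proof (intro allI impI)
      fix i q assume i: "i < ?k - 1" and q: "q < Suc m"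
      have "ipN N (r q) (b' i) = ipN N (r q) (b (\<tau> i)) - (?f (b (\<tau> i)) / ?f (b p)) * ipN N (r q) (b p)"
        unfolding b'_def by (rule ipN_lin)
      then show "ipN N (r q) (b' i) = 0"
        using q b(3) tk[OF i] p by (cases "q = m") auto
    qed
    ultimately show ?thesis by metis
  qed
qed



lemma phi_funpow:
  "(phi \<delta> l ^^ n) (x, y) = (x + real n * l, (if even n then y else of_int \<delta> * x - y) + real (n div 2) * of_int \<delta> * l)"
proof (induction n)
  case 0 then show ?case by simp
next
  case (Suc n)
  have e: "(phi \<delta> l ^^ Suc n) (x, y) = phi \<delta> l ((phi \<delta> l ^^ n) (x, y))" by simp
  show ?case
  proof (cases "even n")
    case True
    then obtain q where q: "n = 2 * q" by blast
    show ?thesis unfolding e Suc.IH using q by (simp add: phi_def algebra_simps)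
  next
    case False
    then obtain q where q: "n = 2 * q + 1" using oddE by blast
    have "Suc n div 2 = q + 1" using q by simp
    then show ?thesis unfolding e Suc.IH using q by (simp add: phi_def algebra_simps)
  qed
qed

lemma phi_inv_funpow:
  "(phi_inv \<delta> l ^^ n) (x, y) = (x - real n * l, (if even n then y else of_int \<delta> * x - y) - real ((n + 1) div 2) * of_int \<delta> * l)"
proof (induction n)
  case 0 then show ?case by simp
next
  case (Suc n)
  have e: "(phi_inv \<delta> l ^^ Suc n) (x, y) = phi_inv \<delta> l ((phi_inv \<delta> l ^^ n) (x, y))" by simp
  show ?case
  proof (cases "even n")
    case True
    then obtain q where q: "n = 2 * q" by blast
    have "(n + 1) div 2 = q" "(Suc n + 1) div 2 = q + 1" using q by simp_all
    then show ?thesis unfolding e Suc.IH using q by (simp add: phi_inv_def algebra_simps)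
  next
    case False
    then obtain q where q: "n = 2 * q + 1" using oddE by blast
    have "(n + 1) div 2 = q + 1" "(Suc n + 1) div 2 = q + 1" using q by simp_all
    then show ?thesis unfolding e Suc.IH using q by (simp add: phi_inv_def algebra_simps)
  qed
qed


lemma phi_pow_eq:
  "phi_pow \<delta> l k (x, y) = (x + of_int k * l, (if even k then y else of_int \<delta> * x - y) + of_int (k div 2) * of_int \<delta> * l)"
proof (cases "0 \<le> k")
  case True
  then obtain n where n: "k = int n" using nonneg_int_cases by blast
  have "int n div 2 = int (n div 2)" by simp
  then show ?thesis using True unfolding phi_pow_def n by (simp add: phi_funpow)
next
  case False
  then obtain n where n: "k = - int n" by (intro that[of "nat (- k)"]) simp
  have d: "(- int n) div 2 = - int ((n + 1) div 2)"
  proof (cases "even n")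
    case True
    then obtain q where "n = 2 * q" by blast
    then show ?thesis by simp
  next
    case False
    then obtain q where "n = 2 * q + 1" using oddE by blast
    then show ?thesis by simp
  qed
  show ?thesis using False unfolding phi_pow_def n by (simp add: phi_inv_funpow d)
qed



lemma sum_list_concat_map: "sum_list (concat (map F xs)) = sum_list (map (\<lambda>x. sum_list (F x)) xs)"
  by (induction xs) auto

lemma sum_list_map_idx: "sum_list (map g xs) = (\<Sum>e<length xs. g (xs ! e))"
  by (simp add: sum_list_sum_nth atLeast0LessThan)

lemma out_fst:
  "sum_list (map fst (out_slopes \<delta> T v)) =
   (\<Sum>e<length (tedges T). case tedges T ! e of (u, w, s, k) \<Rightarrow>
      (if u = v then fst s else 0) - (if w = v then fst s else 0))"
proof -
  have "sum_list (map fst (out_slopes \<delta> T v)) =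
     sum_list (map (\<lambda>x. sum_list (map fst ((\<lambda>(u, w, s, k).
        (if u = v then [s] else []) @
        (if w = v then [(- fst (dphi_pow \<delta> k s), - snd (dphi_pow \<delta> k s))] else [])) x))) (tedges T))"
    unfolding out_slopes_def by (simp add: map_concat sum_list_concat_map comp_def case_prod_beta)
  also have "\<dots> = (\<Sum>e<length (tedges T). case tedges T ! e of (u, w, s, k) \<Rightarrow>
      (if u = v then fst s else 0) - (if w = v then fst s else 0))"
    unfolding sum_list_map_idx
    by (rule sum.cong) (auto simp: dphi_pow_def dphi_def split: prod.splits)
  finally show ?thesis .
qed


lemma bal_phi:
  fixes \<phi> :: "nat \<Rightarrow> real"
  assumes wf: "well_formed T" and bal: "balanced \<delta> T"
  shows "(\<Sum>e<length (tedges T). case tedges T ! e of (u, w, s, k) \<Rightarrow>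
            of_int (fst s) * (\<phi> w - \<phi> u)) = 0"
proof -
  have uw: "u < tnv T \<and> w < tnv T" if "e < length (tedges T)" "tedges T ! e = (u, w, s, k)" for e u w s k
    using wf that nth_mem[OF that(1)] unfolding well_formed_def by fastforce
  have "0 = (\<Sum>v<tnv T. \<phi> v * of_int (sum_list (map fst (out_slopes \<delta> T v))))"
    using bal unfolding balanced_def by simp
  also have "\<dots> = (\<Sum>v<tnv T. \<Sum>e<length (tedges T). \<phi> v * of_int (case tedges T ! e of (u, w, s, k) \<Rightarrow>
      (if u = v then fst s else 0) - (if w = v then fst s else 0)))"
    unfolding out_fst by (simp add: sum_distrib_left)
  also have "\<dots> = (\<Sum>e<length (tedges T). \<Sum>v<tnv T. \<phi> v * of_int (case tedges T ! e of (u, w, s, k) \<Rightarrow>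
      (if u = v then fst s else 0) - (if w = v then fst s else 0)))"
    by (rule sum.swap)
  also have "\<dots> = (\<Sum>e<length (tedges T). case tedges T ! e of (u, w, s, k) \<Rightarrow>
            - (of_int (fst s) * (\<phi> w - \<phi> u)))"
  proof (rule sum.cong[OF refl])
    fix e assume e: "e \<in> {..<length (tedges T)}"
    obtain u w s k where ed: "tedges T ! e = (u, w, s, k)" by (cases "tedges T ! e") auto
    have "(\<Sum>v<tnv T. \<phi> v * of_int ((if u = v then fst s else 0) - (if w = v then fst s else 0)))
        = (\<Sum>v<tnv T. (if u = v then \<phi> v * of_int (fst s) else 0)) - (\<Sum>v<tnv T. (if w = v then \<phi> v * of_int (fst s) else 0))"
      unfolding sum_subtractf[symmetric] by (rule sum.cong) (auto simp: algebra_simps)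
    also have "\<dots> = - (of_int (fst s) * (\<phi> w - \<phi> u))"
      using uw[OF _ ed] e by (simp add: sum.delta algebra_simps)
    finally show "(\<Sum>v<tnv T. \<phi> v * of_int (case tedges T ! e of (u, w, s, k) \<Rightarrow>
      (if u = v then fst s else 0) - (if w = v then fst s else 0))) = (case tedges T ! e of (u, w, s, k) \<Rightarrow>
            - (of_int (fst s) * (\<phi> w - \<phi> u)))" by (simp add: ed)
  qed
  finally have "(\<Sum>e<length (tedges T). - (case tedges T ! e of (u, w, s, k) \<Rightarrow>
            (of_int (fst s) * (\<phi> w - \<phi> u)))) = 0" by (simp add: case_prod_beta)
  then show ?thesis by (simp only: sum_negf neg_equal_0_iff_equal)
qed


lemma count_pts:
  fixes l c \<alpha> \<beta> :: real
  assumes l: "0 < l" and gb: "\<forall>m::int. \<beta> \<noteq> c + of_int m * l"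
  shows "card {m::int. c + of_int m * l \<in> {\<alpha><..<\<beta>}} = nat (\<lfloor>(\<beta> - c) / l\<rfloor> - \<lfloor>(\<alpha> - c) / l\<rfloor>)"
proof -
  have "{m::int. c + of_int m * l \<in> {\<alpha><..<\<beta>}} = {\<lfloor>(\<alpha> - c) / l\<rfloor><..\<lfloor>(\<beta> - c) / l\<rfloor>}"
  proof (intro set_eqI iffI)
    fix m assume "m \<in> {m::int. c + of_int m * l \<in> {\<alpha><..<\<beta>}}"
    then have h: "\<alpha> < c + of_int m * l" "c + of_int m * l < \<beta>" by auto
    from h(1) have "(\<alpha> - c) / l < of_int m" using l by (simp add: field_simps)
    then have "\<lfloor>(\<alpha> - c) / l\<rfloor> < m" by (simp add: floor_less_iff)
    moreover from h(2) have "of_int m \<le> (\<beta> - c) / l" using l by (simp add: field_simps)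
    then have "m \<le> \<lfloor>(\<beta> - c) / l\<rfloor>" by (simp add: le_floor_iff)
    ultimately show "m \<in> {\<lfloor>(\<alpha> - c) / l\<rfloor><..\<lfloor>(\<beta> - c) / l\<rfloor>}" by simp
  next
    fix m assume "m \<in> {\<lfloor>(\<alpha> - c) / l\<rfloor><..\<lfloor>(\<beta> - c) / l\<rfloor>}"
    then have h: "\<lfloor>(\<alpha> - c) / l\<rfloor> < m" "m \<le> \<lfloor>(\<beta> - c) / l\<rfloor>" by auto
    from h(1) have "(\<alpha> - c) / l < of_int m" by (simp add: floor_less_iff)
    then have 1: "\<alpha> < c + of_int m * l" using l by (simp add: field_simps)
    from h(2) have "of_int m \<le> (\<beta> - c) / l" by (simp add: le_floor_iff)
    then have "c + of_int m * l \<le> \<beta>" using l by (simp add: field_simps)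
    moreover have "c + of_int m * l \<noteq> \<beta>" using gb by metis
    ultimately show "m \<in> {m::int. c + of_int m * l \<in> {\<alpha><..<\<beta>}}" using 1 by auto
  qed
  then show ?thesis by simp
qed


lemma term_eq:
  fixes l c p q L :: real and s1 :: int
  assumes l: "0 < l" and L: "0 < L" and q: "q = p + L * of_int s1"
    and gp: "\<forall>m::int. p \<noteq> c + of_int m * l" and gq: "\<forall>m::int. q \<noteq> c + of_int m * l"
  shows "of_int \<bar>s1\<bar> * real (card {m::int. c + of_int m * l \<in> {min p q<..<max p q}})
       = of_int s1 * of_int (\<lfloor>(q - c) / l\<rfloor> - \<lfloor>(p - c) / l\<rfloor>)"
proof (cases "s1 > 0")
  case True
  then have pq: "p < q" using q L by (simp add: mult_pos_pos)
  then have "\<lfloor>(p - c) / l\<rfloor> \<le> \<lfloor>(q - c) / l\<rfloor>" using l by (intro floor_mono) (simp add: divide_right_mono)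
  then show ?thesis using pq True count_pts[OF l gq, of p] by simp
next
  case False
  show ?thesis
  proof (cases "s1 = 0")
    case True then show ?thesis by simp
  next
    case False2: False
    with False have neg: "s1 < 0" by simp
    then have pq: "q < p" using q L by (simp add: mult_pos_neg)
    then have "\<lfloor>(q - c) / l\<rfloor> \<le> \<lfloor>(p - c) / l\<rfloor>" using l by (intro floor_mono) (simp add: divide_right_mono)
    then show ?thesis using pq neg count_pts[OF l gp, of q] by (simp add: algebra_simps)
  qed
qed

lemma fiber_const:
  assumes wf: "well_formed T" and bal: "balanced \<delta> T" and l: "0 < l"
    and edges: "\<forall>e < length (tedges T). case tedges T ! e of (u, w, s, k) \<Rightarrow>
        0 < elen T X e \<and>
        (fst (vpos T X u) + elen T X e * of_int (fst s),
         snd (vpos T X u) + elen T X e * of_int (snd s)) = phi_pow \<delta> l k (vpos T X w)"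
    and gen: "\<forall>v < tnv T. \<forall>m::int. c \<noteq> fst (vpos T X v) + of_int m * l"
  shows "fiber_intersection l T X c =
    (\<Sum>e<length (tedges T). case tedges T ! e of (u, w, s, k) \<Rightarrow> of_int (fst s) * of_int k)"
proof -
  define \<phi> where "\<phi> = (\<lambda>v. real_of_int \<lfloor>(X (2 * v) - c) / l\<rfloor>)"
  have uw: "u < tnv T \<and> w < tnv T" if "e < length (tedges T)" "tedges T ! e = (u, w, s, k)" for e u w s k
    using wf that nth_mem[OF that(1)] unfolding well_formed_def by fastforce
  have "fiber_intersection l T X c = (\<Sum>e<length (tedges T). case tedges T ! e of (u, w, s, k) \<Rightarrow>
           of_int (fst s) * of_int k + of_int (fst s) * (\<phi> w - \<phi> u))"
    unfolding fiber_intersection_def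
  proof (rule sum.cong[OF refl])
    fix e assume e: "e \<in> {..<length (tedges T)}"
    obtain u w s k where ed: "tedges T ! e = (u, w, s, k)" by (cases "tedges T ! e") auto
    have u: "u < tnv T" and w: "w < tnv T" using uw[OF _ ed] e by auto
    have E: "0 < elen T X e" "X (2 * u) + elen T X e * of_int (fst s) = X (2 * w) + of_int k * l"
      using edges e ed by (auto simp: vpos_def phi_pow_eq)
    have gp: "\<forall>m::int. X (2 * u) \<noteq> c + of_int m * l"
    proof
      fix m
      have "c \<noteq> X (2 * u) + of_int (- m) * l" using gen u unfolding vpos_def fst_conv by blast
      then show "X (2 * u) \<noteq> c + of_int m * l" by (auto simp: algebra_simps)
    qed
    have gq: "\<forall>m::int. X (2 * u) + elen T X e * of_int (fst s) \<noteq> c + of_int m * l"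
    proof
      fix m
      have "c \<noteq> X (2 * w) + of_int (k - m) * l" using gen w unfolding vpos_def fst_conv by blast
      then show "X (2 * u) + elen T X e * of_int (fst s) \<noteq> c + of_int m * l"
        unfolding E(2) by (auto simp: algebra_simps)
    qed
    have fl: "\<lfloor>(X (2 * u) + elen T X e * of_int (fst s) - c) / l\<rfloor> = \<lfloor>(X (2 * w) - c) / l\<rfloor> + k"
    proof -
      have "(X (2 * u) + elen T X e * of_int (fst s) - c) / l = (X (2 * w) - c) / l + of_int k"
        unfolding E(2) using l by (simp add: field_simps)
      then show ?thesis by simp
    qed
    show "(case tedges T ! e of (u, w, s, k) \<Rightarrow>
          of_int \<bar>fst s\<bar> * real (card {m::int.
             c + of_int m * l \<in> {min (fst (vpos T X u)) (fst (vpos T X u) + elen T X e * of_int (fst s))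
                              <..< max (fst (vpos T X u)) (fst (vpos T X u) + elen T X e * of_int (fst s))}})) =
          (case tedges T ! e of (u, w, s, k) \<Rightarrow>
           of_int (fst s) * of_int k + of_int (fst s) * (\<phi> w - \<phi> u))"
      unfolding ed prod.case vpos_def fst_conv
      using term_eq[OF l E(1) refl gp gq] fl by (simp add: \<phi>_def algebra_simps)
  qed
  also have "\<dots> = (\<Sum>e<length (tedges T). case tedges T ! e of (u, w, s, k) \<Rightarrow> of_int (fst s) * of_int k)
     + (\<Sum>e<length (tedges T). case tedges T ! e of (u, w, s, k) \<Rightarrow> of_int (fst s) * (\<phi> w - \<phi> u))"
    by (simp add: sum.distrib[symmetric] case_prod_beta)
  also have "(\<Sum>e<length (tedges T). case tedges T ! e of (u, w, s, k) \<Rightarrow> of_int (fst s) * (\<phi> w - \<phi> u)) = 0"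
    by (rule bal_phi[OF wf bal])
  finally show ?thesis by simp
qed



lemma generic_exists:
  fixes l :: real
  shows "\<exists>c. \<forall>v < tnv T. \<forall>m::int. c \<noteq> fst (vpos T X v) + of_int m * l"
proof (rule ccontr)
  assume "\<not> ?thesis"
  then have "UNIV \<subseteq> (\<lambda>(v, m). fst (vpos T X v) + of_int m * l) ` ({..<tnv T} \<times> (UNIV :: int set))"
  proof (intro subsetI)
    fix c assume "\<not> (\<exists>c. \<forall>v<tnv T. \<forall>m::int. c \<noteq> fst (vpos T X v) + of_int m * l)"
    then obtain v m where "v < tnv T" "c = fst (vpos T X v) + of_int (m::int) * l" by blast
    then show "c \<in> (\<lambda>(v, m). fst (vpos T X v) + of_int m * l) ` ({..<tnv T} \<times> (UNIV :: int set))"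
      by (intro image_eqI[of _ _ "(v, m)"]) auto
  qed
  moreover have "countable ((\<lambda>(v, m). fst (vpos T X v) + of_int m * l) ` ({..<tnv T} \<times> (UNIV :: int set)))"
    by (intro countable_image countable_SIGMA) auto
  ultimately have "countable (UNIV :: real set)" using countable_subset by blast
  then show False using uncountable_UNIV_real by blast
qed

definition ind :: "nat \<Rightarrow> nat \<Rightarrow> real" where "ind j q = (if j = q then 1 else 0)"

definition eu :: "ttype \<Rightarrow> nat \<Rightarrow> nat" where "eu T e = fst (tedges T ! e)"
definition ew :: "ttype \<Rightarrow> nat \<Rightarrow> nat" where "ew T e = fst (snd (tedges T ! e))"
definition es :: "ttype \<Rightarrow> nat \<Rightarrow> int \<times> int" where "es T e = fst (snd (snd (tedges T ! e)))"
definition ek :: "ttype \<Rightarrow> nat \<Rightarrow> int" where "ek T e = snd (snd (snd (tedges T ! e)))"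

lemma edge_split: "tedges T ! e = (eu T e, ew T e, es T e, ek T e)"
  by (simp add: eu_def ew_def es_def ek_def)

definition rowx :: "ttype \<Rightarrow> nat \<Rightarrow> nat \<Rightarrow> real" where
  "rowx T e = (\<lambda>j. ind j (2 * eu T e) + of_int (fst (es T e)) * ind j (2 * tnv T + e) - ind j (2 * ew T e))"

definition rowy :: "int \<Rightarrow> ttype \<Rightarrow> nat \<Rightarrow> nat \<Rightarrow> real" where
  "rowy \<delta> T e = (\<lambda>j. ind j (2 * eu T e + 1) + of_int (snd (es T e)) * ind j (2 * tnv T + e) -
      (if even (ek T e) then ind j (2 * ew T e + 1) else of_int \<delta> * ind j (2 * ew T e) - ind j (2 * ew T e + 1)))"

definition rows :: "int \<Rightarrow> ttype \<Rightarrow> nat \<Rightarrow> nat \<Rightarrow> real" where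
  "rows \<delta> T i = (if even i then rowx T (i div 2) else rowy \<delta> T (i div 2))"

lemma ipN_ind: "ipN N (\<lambda>j. ind j q) X = (if q < N then X q else 0)"
proof -
  have "(\<lambda>j. (if j = q then 1 else 0) * X j) = (\<lambda>j. if j = q then X q else 0)" by auto
  then show ?thesis unfolding ipN_def ind_def by (simp only:) (simp add: sum.delta)
qed

lemma ipN_add: "ipN N (\<lambda>j. f j + g j) X = ipN N f X + ipN N g X"
  unfolding ipN_def by (simp add: sum.distrib algebra_simps)
lemma ipN_diff: "ipN N (\<lambda>j. f j - g j) X = ipN N f X - ipN N g X"
  unfolding ipN_def by (simp add: sum_subtractf algebra_simps)
lemma ipN_scale: "ipN N (\<lambda>j. a * f j) X = a * ipN N f X"
  unfolding ipN_def by (simp add: sum_distrib_left algebra_simps)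

lemma ipN_rowx:
  assumes "2 * eu T e < N" "2 * ew T e < N" "2 * tnv T + e < N"
  shows "ipN N (rowx T e) X = X (2 * eu T e) + of_int (fst (es T e)) * X (2 * tnv T + e) - X (2 * ew T e)"
  unfolding rowx_def ipN_diff ipN_add ipN_scale ipN_ind using assms by (simp add: ipN_ind)

lemma ipN_rowy:
  assumes "2 * eu T e + 1 < N" "2 * ew T e + 1 < N" "2 * tnv T + e < N"
  shows "ipN N (rowy \<delta> T e) X = X (2 * eu T e + 1) + of_int (snd (es T e)) * X (2 * tnv T + e) -
     (if even (ek T e) then X (2 * ew T e + 1) else of_int \<delta> * X (2 * ew T e) - X (2 * ew T e + 1))"
proof (cases "even (ek T e)")
  case True
  then show ?thesis unfolding rowy_def ipN_diff ipN_add ipN_scale ipN_ind using assms by (simp add: ipN_ind)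
next
  case False
  then show ?thesis using assms by (simp add: rowy_def ipN_diff ipN_add ipN_scale ipN_ind)
qed


lemma edge_eq_iff:
  assumes e: "e < length (tedges T)" and u: "eu T e < tnv T" and w: "ew T e < tnv T"
  shows "((fst (vpos T X (eu T e)) + elen T X e * of_int (fst (es T e)),
           snd (vpos T X (eu T e)) + elen T X e * of_int (snd (es T e))) = phi_pow \<delta> l (ek T e) (vpos T X (ew T e)))
     \<longleftrightarrow> (ipN (ncoord T) (rowx T e) X = of_int (ek T e) * l \<and>
          ipN (ncoord T) (rowy \<delta> T e) X = of_int (ek T e div 2) * of_int \<delta> * l)"
proof -
  have i: "2 * eu T e < ncoord T" "2 * ew T e < ncoord T" "2 * tnv T + e < ncoord T"
     "2 * eu T e + 1 < ncoord T" "2 * ew T e + 1 < ncoord T"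
    using e u w by (auto simp: ncoord_def)
  show ?thesis
    unfolding ipN_rowx[OF i(1,2,3)] ipN_rowy[OF i(4,5,3)] vpos_def elen_def phi_pow_eq
    by (cases "even (ek T e)") (auto simp: algebra_simps)
qed

lemma sum_2n: "(\<Sum>i<2*(n::nat). (f i::real)) = (\<Sum>e<n. f (2*e) + f (2*e+1))"
  by (induction n) (auto simp: algebra_simps)



lemma core_real:
  fixes x1 y1 x2 y2 x3 y3 p q :: real
  assumes sx: "x1 + x2 + x3 = 0" and sy: "y1 + y2 + y3 = 0"
    and nz1: "x1 \<noteq> 0 \<or> y1 \<noteq> 0" and nz2: "x2 \<noteq> 0 \<or> y2 \<noteq> 0" and nz3: "x3 \<noteq> 0 \<or> y3 \<noteq> 0"
    and o1: "x1 * p + y1 * q = 0" and o2: "x2 * p + y2 * q = 0" and o3: "x3 * p + y3 * q = 0"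
    and n12: "\<not> (x1 * y2 - y1 * x2 = 0 \<and> x1 * x2 + y1 * y2 > 0)"
    and n13: "\<not> (x1 * y3 - y1 * x3 = 0 \<and> x1 * x3 + y1 * y3 > 0)"
    and n23: "\<not> (x2 * y3 - y2 * x3 = 0 \<and> x2 * x3 + y2 * y3 > 0)"
    and pq: "p \<noteq> 0 \<or> q \<noteq> 0"
  shows False
proof -
  define n where "n = p * p + q * q"
  have n: "n > 0" using pq unfolding n_def
    by (metis add_pos_nonneg add_nonneg_pos zero_le_square not_real_square_gt_zero)
  define a where "a = (\<lambda>x y. (y * p - x * q) / n)"
  have rep: "x = a x y * (- q) \<and> y = a x y * p" if h: "x * p + y * q = 0" for x y
  proof -
    have h1: "y * q = - (x * p)" and h2: "x * p = - (y * q)" using h by linarith+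
    have "(y * p - x * q) * (- q) = - p * (y * q) + x * (q * q)" by (simp add: algebra_simps)
    also have "\<dots> = - p * (- (x * p)) + x * (q * q)" by (simp only: h1)
    also have "\<dots> = x * n" by (simp add: n_def algebra_simps)
    finally have e1: "(y * p - x * q) * (- q) = x * n" .
    have "(y * p - x * q) * p = y * (p * p) - q * (x * p)" by (simp add: algebra_simps)
    also have "\<dots> = y * (p * p) - q * (- (y * q))" by (simp only: h2)
    also have "\<dots> = y * n" by (simp add: n_def algebra_simps)
    finally have e2: "(y * p - x * q) * p = y * n" .
    have "a x y * (- q) = x" unfolding a_def using e1 n by (simp add: divide_simps)
    moreover have "a x y * p = y" unfolding a_def using e2 n by (simp add: divide_simps)
    ultimately show ?thesis by simp
  qed

  define a1 a2 a3 where "a1 = a x1 y1" "a2 = a x2 y2" "a3 = a x3 y3"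
  have r1: "x1 = a1 * (- q)" "y1 = a1 * p" using rep[OF o1] a1_a2_a3_def by auto
  have r2: "x2 = a2 * (- q)" "y2 = a2 * p" using rep[OF o2] a1_a2_a3_def by auto
  have r3: "x3 = a3 * (- q)" "y3 = a3 * p" using rep[OF o3] a1_a2_a3_def by auto
  have cr: "xi * yj - yi * xj = 0" if "xi = ai * (- q)" "yi = ai * p" "xj = aj * (- q)" "yj = aj * p" for xi yi xj yj ai aj :: real
    using that by (simp add: algebra_simps)
  have dt: "xi * xj + yi * yj = ai * aj * n" if "xi = ai * (- q)" "yi = ai * p" "xj = aj * (- q)" "yj = aj * p" for xi yi xj yj ai aj :: real
    using that by (simp add: algebra_simps n_def)
  have "a1 * a2 * n \<le> 0" using n12 cr[OF r1 r2] dt[OF r1 r2] by linarith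
  then have p12: "a1 * a2 \<le> 0" using n by (simp add: mult_le_0_iff)
  have "a1 * a3 * n \<le> 0" using n13 cr[OF r1 r3] dt[OF r1 r3] by linarith
  then have p13: "a1 * a3 \<le> 0" using n by (simp add: mult_le_0_iff)
  have "a2 * a3 * n \<le> 0" using n23 cr[OF r2 r3] dt[OF r2 r3] by linarith
  then have p23: "a2 * a3 \<le> 0" using n by (simp add: mult_le_0_iff)
  have z1: "a1 \<noteq> 0" using nz1 r1 by auto
  have z2: "a2 \<noteq> 0" using nz2 r2 by auto
  have z3: "a3 \<noteq> 0" using nz3 r3 by auto
  have "(a1 + a2 + a3) * p = 0" "(a1 + a2 + a3) * q = 0" using sx sy r1 r2 r3 by (simp_all add: algebra_simps)
  then have s: "a1 + a2 + a3 = 0" using pq by auto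
  show False
  proof (cases "a1 > 0")
    case True
    then have "a2 < 0" "a3 < 0" using p12 p13 z2 z3 by (auto simp: mult_le_0_iff)
    then have "a2 * a3 > 0" by (simp add: mult_neg_neg)
    then show False using p23 by simp
  next
    case False
    then have "a1 < 0" using z1 by simp
    then have "a2 > 0" "a3 > 0" using p12 p13 z2 z3 by (auto simp: mult_le_0_iff)
    then have "a2 * a3 > 0" by simp
    then show False using p23 by simp
  qed
qed


lemma sd_real:
  "same_direction s t \<longleftrightarrow>
    (real_of_int (fst s) * real_of_int (snd t) - real_of_int (snd s) * real_of_int (fst t) = 0 \<and>
     real_of_int (fst s) * real_of_int (fst t) + real_of_int (snd s) * real_of_int (snd t) > 0)"
proof -
  have "same_direction s t \<longleftrightarrow>
    (real_of_int (fst s * snd t - snd s * fst t) = 0 \<and> real_of_int (fst s * fst t + snd s * snd t) > 0)"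
    unfolding same_direction_def by (simp only: of_int_eq_0_iff of_int_0_less_iff)
  then show ?thesis by simp
qed

lemma core2:
  fixes \<sigma>1 \<sigma>2 \<sigma>3 :: "int \<times> int" and \<omega>2 \<omega>3 :: "real \<times> real"
  assumes sx: "fst \<sigma>1 + fst \<sigma>2 + fst \<sigma>3 = 0" and sy: "snd \<sigma>1 + snd \<sigma>2 + snd \<sigma>3 = 0"
    and nz: "\<sigma>1 \<noteq> (0,0)" "\<sigma>2 \<noteq> (0,0)" "\<sigma>3 \<noteq> (0,0)"
    and nsd: "\<not> same_direction \<sigma>1 \<sigma>2" "\<not> same_direction \<sigma>1 \<sigma>3" "\<not> same_direction \<sigma>2 \<sigma>3"
    and w: "fst \<omega>2 + fst \<omega>3 = 0" "snd \<omega>2 + snd \<omega>3 = 0"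
    and o2: "fst \<omega>2 * of_int (fst \<sigma>2) + snd \<omega>2 * of_int (snd \<sigma>2) = 0"
    and o3: "fst \<omega>3 * of_int (fst \<sigma>3) + snd \<omega>3 * of_int (snd \<sigma>3) = 0"
  shows "\<omega>2 = (0,0) \<and> \<omega>3 = (0,0)"
proof (rule ccontr)
  assume c: "\<not> ?thesis"
  define p q where "p = fst \<omega>2" "q = snd \<omega>2"
  have w3: "fst \<omega>3 = - p" "snd \<omega>3 = - q" using w p_q_def by auto
  have pq: "p \<noteq> 0 \<or> q \<noteq> 0" using c w3 p_q_def by (cases \<omega>2, cases \<omega>3) auto
  define x1 y1 x2 y2 x3 y3 where "x1 = real_of_int (fst \<sigma>1)" "y1 = real_of_int (snd \<sigma>1)"
    "x2 = real_of_int (fst \<sigma>2)" "y2 = real_of_int (snd \<sigma>2)" "x3 = real_of_int (fst \<sigma>3)" "y3 = real_of_int (snd \<sigma>3)"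
  note X = x1_y1_x2_y2_x3_y3_def
  have rsx: "x1 + x2 + x3 = 0" using sx unfolding X by (metis of_int_0 of_int_add)
  have rsy: "y1 + y2 + y3 = 0" using sy unfolding X by (metis of_int_0 of_int_add)
  have nz1: "x1 \<noteq> 0 \<or> y1 \<noteq> 0" using nz(1) unfolding X by (cases \<sigma>1) auto
  have nz2: "x2 \<noteq> 0 \<or> y2 \<noteq> 0" using nz(2) unfolding X by (cases \<sigma>2) auto
  have nz3: "x3 \<noteq> 0 \<or> y3 \<noteq> 0" using nz(3) unfolding X by (cases \<sigma>3) auto
  have ro2: "x2 * p + y2 * q = 0" using o2 unfolding X p_q_def by (simp add: algebra_simps)
  have ro3: "x3 * p + y3 * q = 0" using o3 w3 unfolding X by (simp add: algebra_simps)
  have ro1: "x1 * p + y1 * q = 0"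
  proof -
    have e: "x1 = - x2 - x3" "y1 = - y2 - y3" using rsx rsy by linarith+
    have "x1 * p + y1 * q = (- x2 - x3) * p + (- y2 - y3) * q" by (simp only: e)
    also have "\<dots> = - (x2 * p + y2 * q) - (x3 * p + y3 * q)" by (simp add: algebra_simps)
    finally have "x1 * p + y1 * q = - (x2 * p + y2 * q) - (x3 * p + y3 * q)" .
    then show ?thesis using ro2 ro3 by simp
  qed
  show False
    by (rule core_real[OF rsx rsy nz1 nz2 nz3 ro1 ro2 ro3 _ _ _ pq])
       (use nsd in \<open>simp_all add: sd_real X\<close>)
qed


lemma local3:
  fixes P :: "((int \<times> int) \<times> (real \<times> real)) list"
  assumes len: "length P = 3"
    and nsd: "\<forall>i<3. \<forall>j<3. i \<noteq> j \<longrightarrow> \<not> same_direction (fst (P!i)) (fst (P!j))"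
    and nz: "\<forall>x\<in>set P. fst x \<noteq> (0,0)"
    and orth: "\<forall>x\<in>set P. fst (snd x) * of_int (fst (fst x)) + snd (snd x) * of_int (snd (fst x)) = 0"
    and s1: "sum_list (map (\<lambda>x. fst (fst x)) P) = 0" and s2: "sum_list (map (\<lambda>x. snd (fst x)) P) = 0"
    and c1: "sum_list (map (\<lambda>x. fst (snd x)) P) = 0" and c2: "sum_list (map (\<lambda>x. snd (snd x)) P) = 0"
    and z: "\<exists>x\<in>set P. snd x = (0,0)"
  shows "\<forall>x\<in>set P. snd x = (0,0)"
proof -
  have P: "P = [P!0, P!1, P!2]" using len by (intro nth_equalityI) (auto simp: less_Suc_eq numeral_3_eq_3 numeral_2_eq_2)
  define A B C where "A = P!0" "B = P!1" "C = P!2"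
  with P have P: "P = [A, B, C]" by simp
  have n01: "\<not> same_direction (fst A) (fst B)" using nsd[rule_format, of 0 1] P by simp
  have n02: "\<not> same_direction (fst A) (fst C)" using nsd[rule_format, of 0 2] P by simp
  have n12: "\<not> same_direction (fst B) (fst C)" using nsd[rule_format, of 1 2] P by simp
  have n10: "\<not> same_direction (fst B) (fst A)" using nsd[rule_format, of 1 0] P by simp
  have n20: "\<not> same_direction (fst C) (fst A)" using nsd[rule_format, of 2 0] P by simp
  have n21: "\<not> same_direction (fst C) (fst B)" using nsd[rule_format, of 2 1] P by simp
  have nzs: "fst A \<noteq> (0,0)" "fst B \<noteq> (0,0)" "fst C \<noteq> (0,0)" using nz P by auto
  have os: "fst (snd A) * of_int (fst (fst A)) + snd (snd A) * of_int (snd (fst A)) = 0"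
    "fst (snd B) * of_int (fst (fst B)) + snd (snd B) * of_int (snd (fst B)) = 0"
    "fst (snd C) * of_int (fst (fst C)) + snd (snd C) * of_int (snd (fst C)) = 0" using orth P by auto
  have ss: "fst (fst A) + fst (fst B) + fst (fst C) = 0" "snd (fst A) + snd (fst B) + snd (fst C) = 0"
    using s1 s2 P by (simp_all add: add.assoc)
  have cs: "fst (snd A) + fst (snd B) + fst (snd C) = 0" "snd (snd A) + snd (snd B) + snd (snd C) = 0"
    using c1 c2 P by (simp_all add: add.assoc)
  from z P consider "snd A = (0,0)" | "snd B = (0,0)" | "snd C = (0,0)" by auto
  then show ?thesis
  proof cases
    case 1
    have "snd B = (0,0) \<and> snd C = (0,0)"
      by (rule core2[OF ss nzs n01 n02 n12 _ _ os(2,3)]) (use cs 1 in auto)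
    then show ?thesis using 1 P by auto
  next
    case 2
    have "fst (snd B) = 0" "snd (snd B) = 0" using 2 by auto
    then have w: "fst (snd A) + fst (snd C) = 0" "snd (snd A) + snd (snd C) = 0" using cs by auto
    have s': "fst (fst B) + fst (fst A) + fst (fst C) = 0" "snd (fst B) + snd (fst A) + snd (fst C) = 0"
      using ss by linarith+
    have "snd A = (0,0) \<and> snd C = (0,0)"
      by (rule core2[OF s' nzs(2,1,3) n10 n12 n02 w os(1,3)])
    then show ?thesis using 2 P by auto
  next
    case 3
    have "fst (snd C) = 0" "snd (snd C) = 0" using 3 by auto
    then have w: "fst (snd A) + fst (snd B) = 0" "snd (snd A) + snd (snd B) = 0" using cs by auto
    have s': "fst (fst C) + fst (fst A) + fst (fst B) = 0" "snd (fst C) + snd (fst A) + snd (fst B) = 0"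
      using ss by linarith+
    have "snd A = (0,0) \<and> snd B = (0,0)"
      by (rule core2[OF s' nzs(3,1,2) n20 n21 n01 w os(1,2)])
    then show ?thesis using 3 P by auto
  qed
qed



definition cw :: "int \<Rightarrow> (nat \<Rightarrow> real) \<Rightarrow> (nat \<Rightarrow> real) \<Rightarrow> ttype \<Rightarrow> nat \<Rightarrow> real \<times> real" where
  "cw \<delta> \<alpha> \<beta> T e = (if even (ek T e) then (- \<alpha> e, - \<beta> e) else (- \<alpha> e - of_int \<delta> * \<beta> e, \<beta> e))"

definition sw :: "int \<Rightarrow> ttype \<Rightarrow> nat \<Rightarrow> int \<times> int" where
  "sw \<delta> T e = (- fst (dphi_pow \<delta> (ek T e) (es T e)), - snd (dphi_pow \<delta> (ek T e) (es T e)))"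

definition pairs_e where
  "pairs_e \<delta> \<alpha> \<beta> T v e = (if eu T e = v then [(es T e, (\<alpha> e, \<beta> e))] else []) @
      (if ew T e = v then [(sw \<delta> T e, cw \<delta> \<alpha> \<beta> T e)] else [])"

definition out_pairs :: "int \<Rightarrow> (nat \<Rightarrow> real) \<Rightarrow> (nat \<Rightarrow> real) \<Rightarrow> ttype \<Rightarrow> nat \<Rightarrow> ((int \<times> int) \<times> (real \<times> real)) list" where
  "out_pairs \<delta> \<alpha> \<beta> T v = concat (map (pairs_e \<delta> \<alpha> \<beta> T v) [0..<length (tedges T)]) @
      map (\<lambda>(u, c). ((0, c), (0, 0))) (filter (\<lambda>(u, c). u = v) (tends T))"

lemma map_idx: "map f xs = map (\<lambda>i. f (xs ! i)) [0..<length xs]"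
  by (intro nth_equalityI) auto

lemma pairs_fst: "map fst (out_pairs \<delta> \<alpha> \<beta> T v) = out_slopes \<delta> T v"
proof -
  have "map fst (concat (map (pairs_e \<delta> \<alpha> \<beta> T v) [0..<length (tedges T)])) =
        concat (map (\<lambda>(u, w, s, k).
        (if u = v then [s] else []) @
        (if w = v then [(- fst (dphi_pow \<delta> k s), - snd (dphi_pow \<delta> k s))] else []))
       (tedges T))"
    unfolding map_concat map_idx[of _ "tedges T"] map_map
    by (rule arg_cong[where f=concat], rule map_cong[OF refl])
       (auto simp: pairs_e_def edge_split sw_def)
  then show ?thesis unfolding out_pairs_def out_slopes_def by (simp add: case_prod_beta comp_def)
qed

lemma pairs_cov_fst:
  "sum_list (map (\<lambda>x. fst (snd x)) (out_pairs \<delta> \<alpha> \<beta> T v)) =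
   (\<Sum>e<length (tedges T). (if eu T e = v then \<alpha> e else 0) + (if ew T e = v then fst (cw \<delta> \<alpha> \<beta> T e) else 0))"
proof -
  have "sum_list (map (\<lambda>x. fst (snd x)) (concat (map (pairs_e \<delta> \<alpha> \<beta> T v) [0..<length (tedges T)])))
     = sum_list (map (\<lambda>e. sum_list (map (\<lambda>x. fst (snd x)) (pairs_e \<delta> \<alpha> \<beta> T v e))) [0..<length (tedges T)])"
    by (simp add: map_concat sum_list_concat_map comp_def)
  also have "\<dots> = (\<Sum>e<length (tedges T). (if eu T e = v then \<alpha> e else 0) + (if ew T e = v then fst (cw \<delta> \<alpha> \<beta> T e) else 0))"
    unfolding sum_set_upt_conv_sum_list_nat[symmetric] atLeast0LessThan
    by (rule sum.cong) (auto simp: pairs_e_def)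
  finally show ?thesis unfolding out_pairs_def by (simp add: case_prod_beta comp_def)
qed

lemma pairs_cov_snd:
  "sum_list (map (\<lambda>x. snd (snd x)) (out_pairs \<delta> \<alpha> \<beta> T v)) =
   (\<Sum>e<length (tedges T). (if eu T e = v then \<beta> e else 0) + (if ew T e = v then snd (cw \<delta> \<alpha> \<beta> T e) else 0))"
proof -
  have "sum_list (map (\<lambda>x. snd (snd x)) (concat (map (pairs_e \<delta> \<alpha> \<beta> T v) [0..<length (tedges T)])))
     = sum_list (map (\<lambda>e. sum_list (map (\<lambda>x. snd (snd x)) (pairs_e \<delta> \<alpha> \<beta> T v e))) [0..<length (tedges T)])"
    by (simp add: map_concat sum_list_concat_map comp_def)
  also have "\<dots> = (\<Sum>e<length (tedges T). (if eu T e = v then \<beta> e else 0) + (if ew T e = v then snd (cw \<delta> \<alpha> \<beta> T e) else 0))"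
    unfolding sum_set_upt_conv_sum_list_nat[symmetric] atLeast0LessThan
    by (rule sum.cong) (auto simp: pairs_e_def)
  finally show ?thesis unfolding out_pairs_def by (simp add: case_prod_beta comp_def)
qed


lemma uw_lt: "well_formed T \<Longrightarrow> e < length (tedges T) \<Longrightarrow> eu T e < tnv T \<and> ew T e < tnv T"
  unfolding well_formed_def using nth_mem[of e "tedges T"] edge_split[of T e] by fastforce

lemma coef_expand:
  "(\<Sum>i<2 * length (tedges T). c i * rows \<delta> T i j) =
   (\<Sum>e<length (tedges T). c (2*e) * rowx T e j + c (2*e+1) * rowy \<delta> T e j)"
  by (simp add: sum_2n rows_def)

lemma coef_len:
  assumes wf: "well_formed T" and e0: "e0 < length (tedges T)"
  shows "(\<Sum>e<length (tedges T). \<alpha> e * rowx T e (2 * tnv T + e0) + \<beta> e * rowy \<delta> T e (2 * tnv T + e0))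
       = \<alpha> e0 * of_int (fst (es T e0)) + \<beta> e0 * of_int (snd (es T e0))"
proof -
  have "(\<Sum>e<length (tedges T). \<alpha> e * rowx T e (2 * tnv T + e0) + \<beta> e * rowy \<delta> T e (2 * tnv T + e0))
     = (\<Sum>e<length (tedges T). if e = e0 then \<alpha> e * of_int (fst (es T e)) + \<beta> e * of_int (snd (es T e)) else 0)"
  proof (rule sum.cong[OF refl])
    fix e assume "e \<in> {..<length (tedges T)}"
    then have "eu T e < tnv T" "ew T e < tnv T" using uw_lt[OF wf] by auto
    then show "\<alpha> e * rowx T e (2 * tnv T + e0) + \<beta> e * rowy \<delta> T e (2 * tnv T + e0) =
      (if e = e0 then \<alpha> e * of_int (fst (es T e)) + \<beta> e * of_int (snd (es T e)) else 0)"
      by (auto simp: rowx_def rowy_def ind_def)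
  qed
  also have "\<dots> = \<alpha> e0 * of_int (fst (es T e0)) + \<beta> e0 * of_int (snd (es T e0))"
    using e0 by (simp add: sum.delta')
  finally show ?thesis .
qed

lemma coef_x:
  assumes wf: "well_formed T" and v: "v < tnv T"
  shows "(\<Sum>e<length (tedges T). \<alpha> e * rowx T e (2 * v) + \<beta> e * rowy \<delta> T e (2 * v))
       = (\<Sum>e<length (tedges T). (if eu T e = v then \<alpha> e else 0) + (if ew T e = v then fst (cw \<delta> \<alpha> \<beta> T e) else 0))"
proof (rule sum.cong[OF refl])
  fix e assume "e \<in> {..<length (tedges T)}"
  then have "eu T e < tnv T" "ew T e < tnv T" using uw_lt[OF wf] by auto
  then show "\<alpha> e * rowx T e (2 * v) + \<beta> e * rowy \<delta> T e (2 * v) =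
      (if eu T e = v then \<alpha> e else 0) + (if ew T e = v then fst (cw \<delta> \<alpha> \<beta> T e) else 0)"
    using v by (auto simp: rowx_def rowy_def ind_def cw_def algebra_simps)
qed

lemma coef_y:
  assumes wf: "well_formed T" and v: "v < tnv T"
  shows "(\<Sum>e<length (tedges T). \<alpha> e * rowx T e (2 * v + 1) + \<beta> e * rowy \<delta> T e (2 * v + 1))
       = (\<Sum>e<length (tedges T). (if eu T e = v then \<beta> e else 0) + (if ew T e = v then snd (cw \<delta> \<alpha> \<beta> T e) else 0))"
proof (rule sum.cong[OF refl])
  fix e assume "e \<in> {..<length (tedges T)}"
  then have "eu T e < tnv T" "ew T e < tnv T" using uw_lt[OF wf] by auto
  then show "\<alpha> e * rowx T e (2 * v + 1) + \<beta> e * rowy \<delta> T e (2 * v + 1) =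
      (if eu T e = v then \<beta> e else 0) + (if ew T e = v then snd (cw \<delta> \<alpha> \<beta> T e) else 0)"
    using v by (auto simp: rowx_def rowy_def ind_def cw_def algebra_simps)
qed


lemma pairs_mem:
  assumes "x \<in> set (out_pairs \<delta> \<alpha> \<beta> T v)"
  shows "(\<exists>e<length (tedges T). (eu T e = v \<and> x = (es T e, (\<alpha> e, \<beta> e))) \<or>
                              (ew T e = v \<and> x = (sw \<delta> T e, cw \<delta> \<alpha> \<beta> T e))) \<or>
         (\<exists>c. (v, c) \<in> set (tends T) \<and> x = ((0, c), (0, 0)))"
  using assms by (auto simp: out_pairs_def pairs_e_def split: if_splits)

lemma es_nz: "immersive \<delta> T \<Longrightarrow> e < length (tedges T) \<Longrightarrow> es T e \<noteq> (0,0)"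
  unfolding immersive_def using nth_mem[of e "tedges T"] edge_split[of T e] by fastforce

lemma pairs_nz:
  assumes im: "immersive \<delta> T" and x: "x \<in> set (out_pairs \<delta> \<alpha> \<beta> T v)"
  shows "fst x \<noteq> (0,0)"
proof -
  have endnz: "c \<noteq> 0" if "(v, c) \<in> set (tends T)" for c
    using im that unfolding immersive_def by fastforce
  have swnz: "sw \<delta> T e \<noteq> (0,0)" if "e < length (tedges T)" for e
    using es_nz[OF im that] by (cases "es T e") (auto simp: sw_def dphi_pow_def dphi_def)
  show ?thesis using pairs_mem[OF x] es_nz[OF im] swnz endnz by fastforce
qed

lemma pairs_orth:
  assumes o: "\<forall>e<length (tedges T). \<alpha> e * of_int (fst (es T e)) + \<beta> e * of_int (snd (es T e)) = 0"
    and x: "x \<in> set (out_pairs \<delta> \<alpha> \<beta> T v)"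
  shows "fst (snd x) * of_int (fst (fst x)) + snd (snd x) * of_int (snd (fst x)) = 0"
proof -
  have "fst (cw \<delta> \<alpha> \<beta> T e) * of_int (fst (sw \<delta> T e)) + snd (cw \<delta> \<alpha> \<beta> T e) * of_int (snd (sw \<delta> T e)) = 0"
    if e: "e < length (tedges T)" for e
  proof -
    have h: "\<alpha> e * of_int (fst (es T e)) + \<beta> e * of_int (snd (es T e)) = 0" using o e by blast
    show ?thesis
    proof (cases "even (ek T e)")
      case True
      then show ?thesis using h by (simp add: cw_def sw_def dphi_pow_def algebra_simps)
    next
      case False
      have "fst (cw \<delta> \<alpha> \<beta> T e) * of_int (fst (sw \<delta> T e)) + snd (cw \<delta> \<alpha> \<beta> T e) * of_int (snd (sw \<delta> T e))
          = \<alpha> e * of_int (fst (es T e)) + \<beta> e * of_int (snd (es T e))"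
        using False by (simp add: cw_def sw_def dphi_pow_def dphi_def algebra_simps)
      then show ?thesis using h by simp
    qed
  qed
  then show ?thesis using pairs_mem[OF x] o by (auto simp: algebra_simps)
qed


lemma rows_indep:
  assumes wf: "well_formed T" and bal: "balanced \<delta> T" and tri: "trivalent \<delta> T"
    and im: "immersive \<delta> T" and ends: "tends T \<noteq> []"
  shows "fam_indep (rows \<delta> T) (2 * length (tedges T))"
  unfolding fam_indep_def
proof (intro allI impI)
  fix c i
  assume H0: "\<forall>j. (\<Sum>i<2 * length (tedges T). c i * rows \<delta> T i j) = 0"
    and i: "i < 2 * length (tedges T)"
  define \<alpha> where "\<alpha> = (\<lambda>e. c (2 * e))"
  define \<beta> where "\<beta> = (\<lambda>e. c (2 * e + 1))"
  let ?ne = "length (tedges T)"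
  have H: "(\<Sum>e<?ne. \<alpha> e * rowx T e j + \<beta> e * rowy \<delta> T e j) = 0" for j
    using H0 unfolding coef_expand \<alpha>_def \<beta>_def by blast
  have orth: "\<forall>e<?ne. \<alpha> e * of_int (fst (es T e)) + \<beta> e * of_int (snd (es T e)) = 0"
  proof (intro allI impI)
    fix e assume e: "e < ?ne"
    show "\<alpha> e * of_int (fst (es T e)) + \<beta> e * of_int (snd (es T e)) = 0"
      using H[of "2 * tnv T + e"] unfolding coef_len[OF wf e] .
  qed
  define P where "P = out_pairs \<delta> \<alpha> \<beta> T"
  define Z where "Z = (\<lambda>v. \<forall>x\<in>set (P v). snd x = (0::real, 0::real))"
  have loc: "Z v" if v: "v < tnv T" and ex: "\<exists>x\<in>set (P v). snd x = (0,0)" for v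
  proof -
    have mf: "map fst (P v) = out_slopes \<delta> T v" unfolding P_def by (rule pairs_fst)
    have len: "length (P v) = 3" using tri v mf unfolding trivalent_def by (metis length_map)
    have nsd: "\<forall>i<3. \<forall>j<3. i \<noteq> j \<longrightarrow> \<not> same_direction (fst (P v ! i)) (fst (P v ! j))"
    proof (intro allI impI)
      fix i j :: nat assume "i < 3" "j < 3" "i \<noteq> j"
      moreover have "fst (P v ! i) = out_slopes \<delta> T v ! i" "fst (P v ! j) = out_slopes \<delta> T v ! j"
        using \<open>i < 3\<close> \<open>j < 3\<close> len mf by (metis nth_map)+
      ultimately show "\<not> same_direction (fst (P v ! i)) (fst (P v ! j))"
        using im v len mf unfolding immersive_def by (metis length_map)
    qed
    have s1: "sum_list (map (\<lambda>x. fst (fst x)) (P v)) = 0"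
    proof -
      have "sum_list (map (\<lambda>x. fst (fst x)) (P v)) = sum_list (map fst (map fst (P v)))" by (simp add: comp_def)
      then show ?thesis using bal v mf unfolding balanced_def by simp
    qed
    have s2: "sum_list (map (\<lambda>x. snd (fst x)) (P v)) = 0"
    proof -
      have "sum_list (map (\<lambda>x. snd (fst x)) (P v)) = sum_list (map snd (map fst (P v)))" by (simp add: comp_def)
      then show ?thesis using bal v mf unfolding balanced_def by simp
    qed
    have c1: "sum_list (map (\<lambda>x. fst (snd x)) (P v)) = 0"
      unfolding P_def pairs_cov_fst coef_x[OF wf v, symmetric] by (rule H)
    have c2: "sum_list (map (\<lambda>x. snd (snd x)) (P v)) = 0"
      unfolding P_def pairs_cov_snd coef_y[OF wf v, symmetric] by (rule H)
    show ?thesis unfolding Z_def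
      by (rule local3[OF len nsd _ _ s1 s2 c1 c2 ex])
         (use pairs_nz[OF im] pairs_orth[OF orth] in \<open>auto simp: P_def\<close>)
  qed
  have memu: "(es T e, (\<alpha> e, \<beta> e)) \<in> set (P (eu T e))" if "e < ?ne" for e
    using that unfolding P_def out_pairs_def pairs_e_def by force
  have memw: "(sw \<delta> T e, cw \<delta> \<alpha> \<beta> T e) \<in> set (P (ew T e))" if "e < ?ne" for e
    using that unfolding P_def out_pairs_def pairs_e_def by force
  have cw0: "cw \<delta> \<alpha> \<beta> T e = (0,0) \<longleftrightarrow> \<alpha> e = 0 \<and> \<beta> e = 0" for e
    by (auto simp: cw_def)
  have zu: "\<alpha> e = 0 \<and> \<beta> e = 0" if "e < ?ne" "Z (eu T e)" for e
    using that memu unfolding Z_def by fastforce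
  have zw: "\<alpha> e = 0 \<and> \<beta> e = 0" if "e < ?ne" "Z (ew T e)" for e
    using that memw cw0 unfolding Z_def by fastforce
  have propag: "Z w" if "(u, w) \<in> adj T" "Z u" for u w
  proof -
    from that(1) consider s k where "(u, w, s, k) \<in> set (tedges T)" | s k where "(w, u, s, k) \<in> set (tedges T)"
      unfolding adj_def by blast
    then show ?thesis
    proof cases
      case 1
      then obtain e where e: "e < ?ne" "tedges T ! e = (u, w, s, k)" by (metis in_set_conv_nth)
      then have ue: "eu T e = u" "ew T e = w" by (simp_all add: eu_def ew_def)
      have z: "\<alpha> e = 0 \<and> \<beta> e = 0" using zu[OF e(1)] that(2) ue by simp
      have "w < tnv T" using uw_lt[OF wf e(1)] ue by simp
      then show ?thesis using loc memw[OF e(1)] cw0 z ue by fastforce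
    next
      case 2
      then obtain e where e: "e < ?ne" "tedges T ! e = (w, u, s, k)" by (metis in_set_conv_nth)
      then have ue: "eu T e = w" "ew T e = u" by (simp_all add: eu_def ew_def)
      have z: "\<alpha> e = 0 \<and> \<beta> e = 0" using zw[OF e(1)] that(2) ue by simp
      have "w < tnv T" using uw_lt[OF wf e(1)] ue by simp
      then show ?thesis using loc memu[OF e(1)] z ue by fastforce
    qed
  qed
  obtain u0 c0 where uc: "(u0, c0) \<in> set (tends T)" using ends by (cases "tends T") auto
  have u0: "u0 < tnv T" using wf uc unfolding well_formed_def by fastforce
  have "((0, c0), (0, 0)) \<in> set (P u0)" using uc unfolding P_def out_pairs_def by force
  then have Z0: "Z u0" using loc u0 by fastforce
  have allZ: "Z v" if "v < tnv T" for v
  proof -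
    have "(u0, v) \<in> (adj T)\<^sup>*" using wf u0 that unfolding well_formed_def by blast
    then show ?thesis
    proof (induction rule: rtrancl_induct)
      case base then show ?case by (rule Z0)
    next
      case (step y z) then show ?case using propag by blast
    qed
  qed
  have ze: "\<alpha> e = 0 \<and> \<beta> e = 0" if "e < ?ne" for e
    using zu[OF that allZ] uw_lt[OF wf that] by blast
  have "i div 2 < ?ne" using i by simp
  then have "c (2 * (i div 2)) = 0 \<and> c (2 * (i div 2) + 1) = 0" using ze unfolding \<alpha>_def \<beta>_def by blast
  then show "c i = 0" by (cases "even i") (auto elim: evenE oddE)
qed



lemma sum_1d: "(\<Sum>i\<in>{1..(d::nat)}. f i) = (\<Sum>i<d. f (Suc i) :: real)"
  by (induction d) (auto simp: atLeastAtMostSuc_conv add.commute)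

lemma sum_split_add: "(\<Sum>i<a + (b::nat). f i) = (\<Sum>i<a. f i) + (\<Sum>i<b. f (a + i) :: real)"
  by (induction b) (auto simp: add.assoc)

lemma aff_indep_mono: assumes "aff_indep_fam x k" "k' \<le> k" shows "aff_indep_fam x k'"
  unfolding aff_indep_fam_def
proof (intro allI impI ballI)
  fix c i assume h: "\<forall>j. (\<Sum>i\<in>{1..k'}. c i * (x i j - x 0 j)) = 0" and i: "i \<in> {1..k'}"
  define c' where "c' = (\<lambda>i. if i \<le> k' then c i else 0)"
  have "\<forall>j. (\<Sum>i\<in>{1..k}. c' i * (x i j - x 0 j)) = 0"
  proof
    fix j
    have "(\<Sum>i\<in>{1..k}. c' i * (x i j - x 0 j)) = (\<Sum>i\<in>{1..k'}. c' i * (x i j - x 0 j))"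
      by (rule sum.mono_neutral_right) (use assms(2) in \<open>auto simp: c'_def\<close>)
    also have "\<dots> = (\<Sum>i\<in>{1..k'}. c i * (x i j - x 0 j))" by (rule sum.cong) (auto simp: c'_def)
    finally show "(\<Sum>i\<in>{1..k}. c' i * (x i j - x 0 j)) = 0" using h by simp
  qed
  then have "c' i = 0" using assms i unfolding aff_indep_fam_def by (elim allE[of _ c']) auto
  then show "c i = 0" using i by (simp add: c'_def)
qed

lemma len_filter_sum:
  assumes "\<forall>x\<in>set xs. f x < (n::nat)"
  shows "(\<Sum>v<n. length (filter (\<lambda>x. f x = v) xs)) = length xs"
  using assms
proof (induction xs)
  case Nil then show ?case by simp
next
  case (Cons x xs)
  have "(\<Sum>v<n. length (filter (\<lambda>y. f y = v) (x # xs))) =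
        (\<Sum>v<n. (if f x = v then 1 else 0) + length (filter (\<lambda>y. f y = v) xs))"
    by (rule sum.cong) auto
  also have "\<dots> = (\<Sum>v<n. (if f x = v then 1 else 0)) + (\<Sum>v<n. length (filter (\<lambda>y. f y = v) xs))"
    by (rule sum.distrib)
  also have "(\<Sum>v<n. (if f x = v then 1 else 0)) = (1::nat)" using Cons.prems by (subst sum.delta') auto
  also have "(\<Sum>v<n. length (filter (\<lambda>y. f y = v) xs)) = length xs" using Cons by simp
  finally show ?case by simp
qed

lemma count_vertices:
  assumes wf: "well_formed T" and tri: "trivalent \<delta> T"
  shows "3 * tnv T = 2 * length (tedges T) + length (tends T)"
proof -
  have lo: "length (out_slopes \<delta> T v) = (\<Sum>e<length (tedges T). (if eu T e = v then 1 else 0) + (if ew T e = v then 1 else 0))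
      + length (filter (\<lambda>x. fst x = v) (tends T))" for v
  proof -
    have "length (out_slopes \<delta> T v) = length (out_pairs \<delta> (\<lambda>_. 0) (\<lambda>_. 0) T v)"
      by (metis length_map pairs_fst)
    also have "\<dots> = sum_list (map (\<lambda>e. length (pairs_e \<delta> (\<lambda>_. 0) (\<lambda>_. 0) T v e)) [0..<length (tedges T)])
      + length (filter (\<lambda>(u, c). u = v) (tends T))"
      unfolding out_pairs_def by (simp add: length_concat comp_def)
    also have "\<dots> = (\<Sum>e<length (tedges T). (if eu T e = v then 1 else 0) + (if ew T e = v then 1 else 0))
      + length (filter (\<lambda>x. fst x = v) (tends T))"
    proof -
      have "sum_list (map (\<lambda>e. length (pairs_e \<delta> (\<lambda>_. 0) (\<lambda>_. 0) T v e)) [0..<length (tedges T)])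
        = (\<Sum>e<length (tedges T). length (pairs_e \<delta> (\<lambda>_. 0) (\<lambda>_. 0) T v e))"
        by (simp add: sum_set_upt_conv_sum_list_nat[symmetric] atLeast0LessThan)
      also have "\<dots> = (\<Sum>e<length (tedges T). (if eu T e = v then 1 else 0) + (if ew T e = v then 1 else 0))"
        by (rule sum.cong) (auto simp: pairs_e_def)
      moreover have "filter (\<lambda>(u, c). u = v) (tends T) = filter (\<lambda>x. fst x = v) (tends T)"
        by (rule filter_cong) auto
      ultimately show ?thesis by simp
    qed
    finally show ?thesis .
  qed
  have "3 * tnv T = (\<Sum>v<tnv T. length (out_slopes \<delta> T v))" using tri unfolding trivalent_def by simp
  also have "\<dots> = (\<Sum>v<tnv T. \<Sum>e<length (tedges T). (if eu T e = v then 1 else 0) + (if ew T e = v then 1 else 0))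
      + (\<Sum>v<tnv T. length (filter (\<lambda>x. fst x = v) (tends T)))"
    unfolding lo by (rule sum.distrib)
  also have "(\<Sum>v<tnv T. length (filter (\<lambda>x. fst x = v) (tends T))) = length (tends T)"
    by (rule len_filter_sum) (use wf in \<open>auto simp: well_formed_def\<close>)
  also have "(\<Sum>v<tnv T. \<Sum>e<length (tedges T). (if eu T e = v then 1 else 0) + (if ew T e = v then (1::nat) else 0))
      = (\<Sum>e<length (tedges T). \<Sum>v<tnv T. (if eu T e = v then 1 else 0) + (if ew T e = v then 1 else 0))"
    by (rule sum.swap)
  also have "\<dots> = (\<Sum>e<length (tedges T). 2)"
  proof (rule sum.cong[OF refl])
    fix e assume "e \<in> {..<length (tedges T)}"
    then have "eu T e < tnv T" "ew T e < tnv T" using uw_lt[OF wf] by auto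
    then show "(\<Sum>v<tnv T. (if eu T e = v then 1 else 0) + (if ew T e = v then 1 else 0)) = (2::nat)"
      by (simp add: sum.distrib sum.delta)
  qed
  finally show ?thesis by simp
qed


definition rhs :: "int \<Rightarrow> real \<Rightarrow> ttype \<Rightarrow> nat \<Rightarrow> real" where
  "rhs \<delta> l T q = (if even q then of_int (ek T (q div 2)) * l else of_int (ek T (q div 2) div 2) * of_int \<delta> * l)"

lemma rows_support:
  assumes wf: "well_formed T" and q: "q < 2 * length (tedges T)" and j: "ncoord T \<le> j"
  shows "rows \<delta> T q j = 0"
proof -
  have e: "q div 2 < length (tedges T)" using q by simp
  have "eu T (q div 2) < tnv T" "ew T (q div 2) < tnv T" using uw_lt[OF wf e] by auto
  then show ?thesis using j e by (auto simp: rows_def rowx_def rowy_def ind_def ncoord_def)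
qed

lemma cell_edges_iff:
  assumes wf: "well_formed T"
  shows "(\<forall>e < length (tedges T). case tedges T ! e of (u, w, s, k) \<Rightarrow>
        0 < elen T X e \<and>
        (fst (vpos T X u) + elen T X e * of_int (fst s),
         snd (vpos T X u) + elen T X e * of_int (snd s)) = phi_pow \<delta> l k (vpos T X w))
    \<longleftrightarrow> (\<forall>e < length (tedges T). 0 < elen T X e) \<and>
        (\<forall>q < 2 * length (tedges T). ipN (ncoord T) (rows \<delta> T q) X = rhs \<delta> l T q)"
proof -
  have A: "(case tedges T ! e of (u, w, s, k) \<Rightarrow>
        0 < elen T X e \<and>
        (fst (vpos T X u) + elen T X e * of_int (fst s),
         snd (vpos T X u) + elen T X e * of_int (snd s)) = phi_pow \<delta> l k (vpos T X w))
     \<longleftrightarrow> 0 < elen T X e \<and> ipN (ncoord T) (rows \<delta> T (2 * e)) X = rhs \<delta> l T (2 * e)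
         \<and> ipN (ncoord T) (rows \<delta> T (2 * e + 1)) X = rhs \<delta> l T (2 * e + 1)"
    if e: "e < length (tedges T)" for e
  proof -
    have uw: "eu T e < tnv T" "ew T e < tnv T" using uw_lt[OF wf e] by auto
    show ?thesis unfolding edge_split prod.case edge_eq_iff[OF e uw]
      by (simp add: rows_def rhs_def)
  qed
  have S: "(\<forall>q < 2 * length (tedges T). P q) \<longleftrightarrow> (\<forall>e < length (tedges T). P (2 * e) \<and> P (2 * e + 1))" for P
  proof
    assume "\<forall>q < 2 * length (tedges T). P q" then show "\<forall>e < length (tedges T). P (2 * e) \<and> P (2 * e + 1)" by auto
  next
    assume h: "\<forall>e < length (tedges T). P (2 * e) \<and> P (2 * e + 1)"
    show "\<forall>q < 2 * length (tedges T). P q"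
    proof (intro allI impI)
      fix q assume q: "q < 2 * length (tedges T)"
      then have "q div 2 < length (tedges T)" by simp
      then have "P (2 * (q div 2)) \<and> P (2 * (q div 2) + 1)" using h by blast
      then show "P q" by (cases "even q") (auto elim: evenE oddE)
    qed
  qed
  let ?P = "\<lambda>q. ipN (ncoord T) (rows \<delta> T q) X = rhs \<delta> l T q"
  have "(\<forall>e < length (tedges T). case tedges T ! e of (u, w, s, k) \<Rightarrow>
        0 < elen T X e \<and>
        (fst (vpos T X u) + elen T X e * of_int (fst s),
         snd (vpos T X u) + elen T X e * of_int (snd s)) = phi_pow \<delta> l k (vpos T X w))
     \<longleftrightarrow> (\<forall>e < length (tedges T). 0 < elen T X e \<and> ?P (2 * e) \<and> ?P (2 * e + 1))"
    using A by simp
  also have "\<dots> \<longleftrightarrow> (\<forall>e < length (tedges T). 0 < elen T X e) \<and> (\<forall>e < length (tedges T). ?P (2 * e) \<and> ?P (2 * e + 1))"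
    by blast
  also have "\<dots> \<longleftrightarrow> (\<forall>e < length (tedges T). 0 < elen T X e) \<and> (\<forall>q < 2 * length (tedges T). ?P q)"
    using S[of ?P] by simp
  finally show ?thesis .
qed


lemma cell_facts:
  assumes wf: "well_formed T" and X: "X \<in> cell \<delta> l a T"
  shows "\<forall>i. ncoord T \<le> i \<longrightarrow> X i = 0"
    and "\<forall>e < length (tedges T). 0 < elen T X e"
    and "\<forall>q < 2 * length (tedges T). ipN (ncoord T) (rows \<delta> T q) X = rhs \<delta> l T q"
    and "\<forall>j < length (tmarks T). case tmarks T ! j of (bd, e) \<Rightarrow>
        0 \<le> mpos T X j \<and> (bd \<longrightarrow> mpos T X j \<le> elen T X e)"
proof -
  note XC = X[unfolded cell_def mem_Collect_eq]
  show "\<forall>i. ncoord T \<le> i \<longrightarrow> X i = 0" by (rule conjunct1[OF XC])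
  have ed: "(\<forall>e < length (tedges T). 0 < elen T X e) \<and>
        (\<forall>q < 2 * length (tedges T). ipN (ncoord T) (rows \<delta> T q) X = rhs \<delta> l T q)"
    by (subst cell_edges_iff[OF wf, symmetric]) (rule conjunct1[OF conjunct2[OF XC]])
  then show "\<forall>e < length (tedges T). 0 < elen T X e"
    and "\<forall>q < 2 * length (tedges T). ipN (ncoord T) (rows \<delta> T q) X = rhs \<delta> l T q" by simp_all
  show "\<forall>j < length (tmarks T). case tmarks T ! j of (bd, e) \<Rightarrow>
        0 \<le> mpos T X j \<and> (bd \<longrightarrow> mpos T X j \<le> elen T X e)"
    by (rule conjunct1[OF conjunct2[OF conjunct2[OF XC]]])
qed

lemma cell_intro:
  assumes wf: "well_formed T" and bal: "balanced \<delta> T" and l: "0 < l"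
    and X0: "X0 \<in> cell \<delta> l a T"
    and sup: "\<forall>i. ncoord T \<le> i \<longrightarrow> X i = 0"
    and len: "\<forall>e < length (tedges T). 0 < elen T X e"
    and eqs: "\<forall>q < 2 * length (tedges T). ipN (ncoord T) (rows \<delta> T q) X = rhs \<delta> l T q"
    and mk: "\<forall>j < length (tmarks T). case tmarks T ! j of (bd, e) \<Rightarrow>
        0 \<le> mpos T X j \<and> (bd \<longrightarrow> mpos T X j \<le> elen T X e)"
  shows "X \<in> cell \<delta> l a T"
proof -
  have ed: "\<forall>e < length (tedges T). case tedges T ! e of (u, w, s, k) \<Rightarrow>
        0 < elen T X e \<and>
        (fst (vpos T X u) + elen T X e * of_int (fst s),
         snd (vpos T X u) + elen T X e * of_int (snd s)) = phi_pow \<delta> l k (vpos T X w)"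
    by (subst cell_edges_iff[OF wf]) (intro conjI len eqs)
  have ed0: "\<forall>e < length (tedges T). case tedges T ! e of (u, w, s, k) \<Rightarrow>
        0 < elen T X0 e \<and>
        (fst (vpos T X0 u) + elen T X0 e * of_int (fst s),
         snd (vpos T X0 u) + elen T X0 e * of_int (snd s)) = phi_pow \<delta> l k (vpos T X0 w)"
    by (rule conjunct1[OF conjunct2[OF X0[unfolded cell_def mem_Collect_eq]]])
  obtain c0 where c0: "\<forall>v < tnv T. \<forall>m::int. c0 \<noteq> fst (vpos T X0 v) + of_int m * l"
    using generic_exists by blast
  have "fiber_intersection l T X0 c0 = 2 * a"
    using conjunct2[OF conjunct2[OF conjunct2[OF X0[unfolded cell_def mem_Collect_eq]]]] c0 by blast
  then have S: "(\<Sum>e<length (tedges T). case tedges T ! e of (u, w, s, k) \<Rightarrow> of_int (fst s) * of_int k) = 2 * a"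
    using fiber_const[OF wf bal l ed0 c0] by simp
  have fib: "\<forall>c. (\<forall>v < tnv T. \<forall>m::int. c \<noteq> fst (vpos T X v) + of_int m * l) \<longrightarrow>
        fiber_intersection l T X c = 2 * a"
    using fiber_const[OF wf bal l ed] S by simp
  show ?thesis unfolding cell_def mem_Collect_eq by (intro conjI sup ed mk fib)
qed



lemma ev_small:
  fixes A B :: "'i \<Rightarrow> real"
  assumes "finite I" "\<forall>i\<in>I. 0 < A i"
  shows "eventually (\<lambda>t. \<forall>i\<in>I. 0 < A i + t * B i) (at_right 0)"
proof -
  have "eventually (\<lambda>t. 0 < A i + t * B i) (at_right 0)" if i: "i \<in> I" for i
  proof -
    have "((\<lambda>t. A i + t * B i) \<longlongrightarrow> A i + 0 * B i) (at_right 0)"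
      by (intro tendsto_intros)
    then have "((\<lambda>t. A i + t * B i) \<longlongrightarrow> A i) (at_right 0)" by simp
    then show ?thesis using assms(2) i by (intro order_tendstoD(1)) auto
  qed
  then show ?thesis using assms(1) by (simp add: eventually_ball_finite)
qed

lemma ev_pos: "eventually P (at_right (0::real)) \<Longrightarrow> \<exists>t>0. P t"
  unfolding eventually_at_right_field by (metis half_gt_zero_iff less_add_same_cancel1 field_sum_of_halves)

lemma rows_support2:
  assumes wf: "well_formed T" and q: "q < 2 * length (tedges T)" and j: "2 * tnv T + length (tedges T) \<le> j"
  shows "rows \<delta> T q j = 0"
proof -
  have e: "q div 2 < length (tedges T)" using q by simp
  have "eu T (q div 2) < tnv T" "ew T (q div 2) < tnv T" using uw_lt[OF wf e] by auto
  then show ?thesis using j e by (auto simp: rows_def rowx_def rowy_def ind_def)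
qed

lemma ipN_lin2: "ipN N r (\<lambda>j. x j + t * y j) = ipN N r x + t * ipN N r y"
  by (simp add: ipN_def algebra_simps sum.distrib sum_distrib_left)

lemma ipN_sum2: "ipN N r (\<lambda>j. \<Sum>i\<in>I. f i j) = (\<Sum>i\<in>I. ipN N r (f i))"
  unfolding ipN_def by (simp add: sum_distrib_left sum.swap[of _ I])

lemma ipN_sum1: "(\<Sum>j<N. (\<Sum>q\<in>I. c q * r q j) * y j) = (\<Sum>q\<in>I. c q * ipN N (r q) y)"
  unfolding ipN_def by (simp add: sum_distrib_right sum_distrib_left sum.swap[of _ I] algebra_simps)


lemma upper:
  assumes wf: "well_formed T" and bal: "balanced \<delta> T" and tri: "trivalent \<delta> T"
    and im: "immersive \<delta> T" and ends: "tends T \<noteq> []"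
    and dN: "d + 2 * length (tedges T) = ncoord T"
  shows "\<not> (\<exists>x. (\<forall>i\<le>Suc d. x i \<in> cell \<delta> l a T) \<and> aff_indep_fam x (Suc d))"
proof
  assume "\<exists>x. (\<forall>i\<le>Suc d. x i \<in> cell \<delta> l a T) \<and> aff_indep_fam x (Suc d)"
  then obtain x where xc: "\<forall>i\<le>Suc d. x i \<in> cell \<delta> l a T" and xi: "aff_indep_fam x (Suc d)" by blast
  let ?E = "2 * length (tedges T)"
  let ?N = "ncoord T"
  define z where "z = (\<lambda>i. if i < ?E then rows \<delta> T i else (\<lambda>j. x (i - ?E + 1) j - x 0 j))"
  have RI: "fam_indep (rows \<delta> T) ?E" by (rule rows_indep[OF wf bal tri im ends])
  have xrow: "ipN ?N (rows \<delta> T q) (x i) = rhs \<delta> l T q" if "i \<le> Suc d" "q < ?E" for i q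
    using cell_facts(3)[OF wf xc[rule_format, OF that(1)]] that(2) by blast
  have xsup: "x i j = 0" if "i \<le> Suc d" "?N \<le> j" for i j
    using cell_facts(1)[OF wf xc[rule_format, OF that(1)]] that(2) by blast
  have "fam_indep z (?E + Suc d)"
    unfolding fam_indep_def
  proof (intro allI impI)
    fix c i
    assume H: "\<forall>j. (\<Sum>i<?E + Suc d. c i * z i j) = 0" and i: "i < ?E + Suc d"
    define \<rho> where "\<rho> = (\<lambda>j. \<Sum>q<?E. c q * rows \<delta> T q j)"
    define \<psi> where "\<psi> = (\<lambda>j. \<Sum>k<Suc d. c (?E + k) * (x (k + 1) j - x 0 j))"
    have H': "\<rho> j + \<psi> j = 0" for j
    proof -
      have "(\<Sum>i<?E + Suc d. c i * z i j) = (\<Sum>i<?E. c i * z i j) + (\<Sum>k<Suc d. c (?E + k) * z (?E + k) j)"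
        by (rule sum_split_add)
      also have "(\<Sum>i<?E. c i * z i j) = \<rho> j" unfolding \<rho>_def by (rule sum.cong) (auto simp: z_def)
      also have "(\<Sum>k<Suc d. c (?E + k) * z (?E + k) j) = \<psi> j" unfolding \<psi>_def by (rule sum.cong) (auto simp: z_def)
      finally show ?thesis using H by simp
    qed
    have rpsi: "ipN ?N (rows \<delta> T q) \<psi> = 0" if q: "q < ?E" for q
    proof -
      have "ipN ?N (rows \<delta> T q) \<psi> = (\<Sum>k<Suc d. ipN ?N (rows \<delta> T q) (\<lambda>j. c (?E + k) * (x (k + 1) j - x 0 j)))"
        unfolding \<psi>_def by (rule ipN_sum2)
      also have "\<dots> = (\<Sum>k<Suc d. c (?E + k) * (ipN ?N (rows \<delta> T q) (x (k + 1)) - ipN ?N (rows \<delta> T q) (x 0)))"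
        by (rule sum.cong) (auto simp: ipN_def sum_distrib_left sum_subtractf algebra_simps)
      also have "\<dots> = 0" using xrow q by (intro sum.neutral) auto
      finally show ?thesis .
    qed
    have "(\<Sum>j<?N. \<rho> j * \<psi> j) = (\<Sum>q<?E. c q * ipN ?N (rows \<delta> T q) \<psi>)"
      unfolding \<rho>_def by (rule ipN_sum1)
    also have "\<dots> = 0" using rpsi by simp
    finally have "(\<Sum>j<?N. \<rho> j * \<psi> j) = 0" .
    moreover have "\<psi> j = - \<rho> j" for j using H'[of j] by simp
    ultimately have "(\<Sum>j<?N. \<rho> j * \<rho> j) = 0" by (simp add: sum_negf)
    then have "\<forall>j\<in>{..<?N}. \<rho> j * \<rho> j = 0" by (subst sum_nonneg_eq_0_iff[symmetric]) auto
    then have r0: "\<rho> j = 0" for j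
    proof (cases "j < ?N")
      case False
      then show ?thesis unfolding \<rho>_def using rows_support[OF wf] by (simp add: not_less)
    qed auto
    have cq: "c q = 0" if "q < ?E" for q
      using RI that r0 unfolding fam_indep_def \<rho>_def by (elim allE[of _ c]) auto
    have p0: "\<psi> j = 0" for j using H'[of j] r0[of j] by simp
    define c' where "c' = (\<lambda>k. c (?E + k - 1))"
    have "\<forall>j. (\<Sum>k\<in>{1..Suc d}. c' k * (x k j - x 0 j)) = 0"
    proof
      fix j
      have "(\<Sum>k\<in>{1..Suc d}. c' k * (x k j - x 0 j)) = (\<Sum>k<Suc d. c' (Suc k) * (x (Suc k) j - x 0 j))"
        by (rule sum_1d)
      also have "\<dots> = \<psi> j" unfolding \<psi>_def c'_def by (rule sum.cong) auto
      finally show "(\<Sum>k\<in>{1..Suc d}. c' k * (x k j - x 0 j)) = 0" using p0 by simp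
    qed
    then have c'0: "\<forall>k\<in>{1..Suc d}. c' k = 0" using xi unfolding aff_indep_fam_def by blast
    show "c i = 0"
    proof (cases "i < ?E")
      case True then show ?thesis by (rule cq)
    next
      case False
      then have "i - ?E + 1 \<in> {1..Suc d}" using i by auto
      then have "c' (i - ?E + 1) = 0" using c'0 by blast
      then show ?thesis unfolding c'_def using False by simp
    qed
  qed
  moreover have "\<forall>i<?E + Suc d. \<forall>j\<ge>?N. z i j = 0"
    using rows_support[OF wf] xsup by (auto simp: z_def)
  ultimately have "?E + Suc d \<le> ?N" by (rule steinitz)
  then show False using dN by simp
qed


lemma lower_cell:
  assumes wf: "well_formed T" and bal: "balanced \<delta> T" and l: "0 < l"
    and X0: "X0 \<in> cell \<delta> l a T"
    and dN: "d + 2 * length (tedges T) = ncoord T"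
  shows "\<exists>x. (\<forall>i\<le>d. x i \<in> cell \<delta> l a T) \<and> aff_indep_fam x d"
proof -
  let ?E = "length (tedges T)"
  let ?M = "2 * tnv T + length (tedges T)"
  let ?N = "ncoord T"
  let ?n = "length (tmarks T)"
  have NM: "?N = ?M + ?n" by (simp add: ncoord_def)
  note f0 = cell_facts[OF wf X0]
  have mwf: "\<forall>j < ?n. fst (tmarks T ! j) \<longrightarrow> snd (tmarks T ! j) < ?E"
    using wf unfolding well_formed_def by (fastforce dest: nth_mem)
  define X1 where "X1 = (\<lambda>i. if ?M \<le> i \<and> i < ?N then
      (case tmarks T ! (i - ?M) of (bd, e) \<Rightarrow> if bd then elen T X0 e / 2 else 1) else X0 i)"
  have elen1: "elen T X1 e = elen T X0 e" if "e < ?E" for e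
    using that by (simp add: X1_def elen_def)
  have mpos1: "mpos T X1 j = (case tmarks T ! j of (bd, e) \<Rightarrow> if bd then elen T X0 e / 2 else 1)" if "j < ?n" for j
    using that NM by (simp add: X1_def mpos_def)
  have sup1: "\<forall>i. ?N \<le> i \<longrightarrow> X1 i = 0" using f0(1) by (simp add: X1_def)
  have eqs1: "ipN ?N (rows \<delta> T q) X1 = rhs \<delta> l T q" if q: "q < 2 * ?E" for q
  proof -
    have "ipN ?N (rows \<delta> T q) X1 = ipN ?N (rows \<delta> T q) X0"
      unfolding ipN_def
    proof (rule sum.cong[OF refl])
      fix j assume "j \<in> {..<?N}"
      show "rows \<delta> T q j * X1 j = rows \<delta> T q j * X0 j"
      proof (cases "j < ?M")
        case True then show ?thesis by (simp add: X1_def)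
      next
        case False then show ?thesis using rows_support2[OF wf q] by simp
      qed
    qed
    then show ?thesis using f0(3) q by simp
  qed
  have I1: "\<forall>e\<in>{..<?E}. 0 < elen T X1 e" using f0(2) elen1 by simp
  have I2: "\<forall>j\<in>{..<?n}. 0 < mpos T X1 j"
  proof
    fix j assume j: "j \<in> {..<?n}"
    obtain bd e where m: "tmarks T ! j = (bd, e)" by (cases "tmarks T ! j") auto
    show "0 < mpos T X1 j"
    proof (cases bd)
      case True
      then have "e < ?E" using mwf j m by fastforce
      then show ?thesis using mpos1 j m True f0(2) by simp
    qed (use mpos1 j m in simp)
  qed
  define J where "J = {j. j < ?n \<and> fst (tmarks T ! j)}"
  have I3: "\<forall>j\<in>J. 0 < elen T X1 (snd (tmarks T ! j)) - mpos T X1 j"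
  proof
    fix j assume j: "j \<in> J"
    obtain bd e where m: "tmarks T ! j = (bd, e)" by (cases "tmarks T ! j") auto
    have "bd" "j < ?n" using j m by (auto simp: J_def)
    then have "e < ?E" using mwf m by fastforce
    then show "0 < elen T X1 (snd (tmarks T ! j)) - mpos T X1 j"
      using mpos1 \<open>j < ?n\<close> m \<open>bd\<close> f0(2) elen1 by simp
  qed
  have perturb: "\<exists>t>0. (\<lambda>j. X1 j + t * y j) \<in> cell \<delta> l a T"
    if ysup: "\<forall>j. ?N \<le> j \<longrightarrow> y j = 0" and yrow: "\<forall>q < 2 * ?E. ipN ?N (rows \<delta> T q) y = 0" for y
  proof -
    have "eventually (\<lambda>t. (\<forall>e\<in>{..<?E}. 0 < elen T X1 e + t * elen T y e) \<and>
        (\<forall>j\<in>{..<?n}. 0 < mpos T X1 j + t * mpos T y j) \<and>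
        (\<forall>j\<in>J. 0 < (elen T X1 (snd (tmarks T ! j)) - mpos T X1 j) + t * (elen T y (snd (tmarks T ! j)) - mpos T y j)))
        (at_right 0)"
      by (intro eventually_conj ev_small I1 I2 I3) (auto simp: J_def)
    then obtain t where t: "t > 0" "\<forall>e\<in>{..<?E}. 0 < elen T X1 e + t * elen T y e"
        "\<forall>j\<in>{..<?n}. 0 < mpos T X1 j + t * mpos T y j"
        "\<forall>j\<in>J. 0 < (elen T X1 (snd (tmarks T ! j)) - mpos T X1 j) + t * (elen T y (snd (tmarks T ! j)) - mpos T y j)"
      using ev_pos by blast
    define Xt where "Xt = (\<lambda>j. X1 j + t * y j)"
    have el: "elen T Xt e = elen T X1 e + t * elen T y e" for e by (simp add: Xt_def elen_def)
    have mp: "mpos T Xt j = mpos T X1 j + t * mpos T y j" for j by (simp add: Xt_def mpos_def)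
    have "Xt \<in> cell \<delta> l a T"
    proof (rule cell_intro[OF wf bal l X0])
      show "\<forall>i. ?N \<le> i \<longrightarrow> Xt i = 0" using sup1 ysup by (simp add: Xt_def)
      show "\<forall>e < ?E. 0 < elen T Xt e" using t(2) el by simp
      show "\<forall>q < 2 * ?E. ipN ?N (rows \<delta> T q) Xt = rhs \<delta> l T q"
        using eqs1 yrow by (simp add: Xt_def ipN_lin2)
      show "\<forall>j < ?n. case tmarks T ! j of (bd, e) \<Rightarrow> 0 \<le> mpos T Xt j \<and> (bd \<longrightarrow> mpos T Xt j \<le> elen T Xt e)"
      proof (intro allI impI)
        fix j assume j: "j < ?n"
        obtain bd e where m: "tmarks T ! j = (bd, e)" by (cases "tmarks T ! j") auto
        have a1: "0 \<le> mpos T Xt j" using t(3) j mp by (simp add: less_imp_le)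
        have a2: "mpos T Xt j \<le> elen T Xt e" if "bd"
        proof -
          have "j \<in> J" using j m that by (simp add: J_def)
          then have "0 < (elen T X1 e - mpos T X1 j) + t * (elen T y e - mpos T y j)" using t(4) m by fastforce
          then show ?thesis using el mp by (simp add: algebra_simps)
        qed
        show "case tmarks T ! j of (bd, e) \<Rightarrow> 0 \<le> mpos T Xt j \<and> (bd \<longrightarrow> mpos T Xt j \<le> elen T Xt e)"
          using a1 a2 m by simp
      qed
    qed
    then show ?thesis using t(1) unfolding Xt_def by blast
  qed
  obtain b where b: "fam_indep b (?N - 2 * ?E)" "\<forall>i<?N - 2 * ?E. \<forall>j\<ge>?N. b i j = 0"
      "\<forall>i<?N - 2 * ?E. \<forall>q<2 * ?E. ipN ?N (rows \<delta> T q) (b i) = 0"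
    using lower[of ?N "2 * ?E" "rows \<delta> T"] by blast
  have dd: "?N - 2 * ?E = d" using dN by simp
  have "\<forall>i\<in>{..<d}. \<exists>t. t > 0 \<and> (\<lambda>j. X1 j + t * b i j) \<in> cell \<delta> l a T"
    using perturb b(2,3) unfolding dd by blast
  then obtain tt where tt: "\<forall>i\<in>{..<d}. tt i > 0 \<and> (\<lambda>j. X1 j + tt i * b i j) \<in> cell \<delta> l a T"
    by (metis bchoice)
  have X1c: "X1 \<in> cell \<delta> l a T"
  proof (rule cell_intro[OF wf bal l X0 sup1])
    show "\<forall>e < ?E. 0 < elen T X1 e" using I1 by simp
    show "\<forall>q < 2 * ?E. ipN ?N (rows \<delta> T q) X1 = rhs \<delta> l T q" using eqs1 by simp
    show "\<forall>j < ?n. case tmarks T ! j of (bd, e) \<Rightarrow> 0 \<le> mpos T X1 j \<and> (bd \<longrightarrow> mpos T X1 j \<le> elen T X1 e)"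
    proof (intro allI impI)
      fix j assume j: "j < ?n"
      obtain bd e where m: "tmarks T ! j = (bd, e)" by (cases "tmarks T ! j") auto
      have "0 < mpos T X1 j" using I2 j by simp
      moreover have "mpos T X1 j \<le> elen T X1 e" if "bd"
      proof -
        have "j \<in> J" using j m that by (simp add: J_def)
        then show ?thesis using I3 m by fastforce
      qed
      ultimately show "case tmarks T ! j of (bd, e) \<Rightarrow> 0 \<le> mpos T X1 j \<and> (bd \<longrightarrow> mpos T X1 j \<le> elen T X1 e)"
        using m by simp
    qed
  qed
  define x where "x = (\<lambda>i. if i = 0 then X1 else (\<lambda>j. X1 j + tt (i - 1) * b (i - 1) j))"
  have "\<forall>i\<le>d. x i \<in> cell \<delta> l a T"
  proof (intro allI impI)
    fix i assume "i \<le> d"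
    then show "x i \<in> cell \<delta> l a T" using X1c tt by (cases i) (auto simp: x_def)
  qed
  moreover have "aff_indep_fam x d"
    unfolding aff_indep_fam_def
  proof (intro allI impI ballI)
    fix c i assume H: "\<forall>j. (\<Sum>i\<in>{1..d}. c i * (x i j - x 0 j)) = 0" and i: "i \<in> {1..d}"
    have "\<forall>j. (\<Sum>k<d. (c (Suc k) * tt k) * b k j) = 0"
    proof
      fix j
      have "(\<Sum>i\<in>{1..d}. c i * (x i j - x 0 j)) = (\<Sum>k<d. c (Suc k) * (x (Suc k) j - x 0 j))"
        by (rule sum_1d)
      also have "\<dots> = (\<Sum>k<d. (c (Suc k) * tt k) * b k j)" by (rule sum.cong) (auto simp: x_def)
      finally show "(\<Sum>k<d. (c (Suc k) * tt k) * b k j) = 0" using H by simp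
    qed
    then have "\<forall>k<d. c (Suc k) * tt k = 0" using b(1) unfolding dd fam_indep_def
      by (elim allE[of _ "\<lambda>k. c (Suc k) * tt k"]) simp
    moreover have "i - 1 < d" "Suc (i - 1) = i" using i by auto
    ultimately have "c i * tt (i - 1) = 0" by metis
    moreover have "tt (i - 1) > 0" using tt \<open>i - 1 < d\<close> by blast
    ultimately show "c i = 0" by simp
  qed
  ultimately show ?thesis by blast
qed



lemma dim_cell:
  assumes st: "simple_type \<delta> g n b \<mu> T" and \<mu>ne: "\<mu> \<noteq> {#}" and l: "0 < l"
    and ne: "cell \<delta> l a T \<noteq> {}"
  shows "has_aff_dim (cell \<delta> l a T) (size \<mu> + g - 1 + n)"
proof -
  have wf: "well_formed T" and bal: "balanced \<delta> T" and tri: "trivalent \<delta> T" and im: "immersive \<delta> T"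
    and gen: "genus T = int g" and nm: "length (tmarks T) = n" and ew: "end_weights T = \<mu>"
    using st unfolding simple_type_def by auto
  have R: "size \<mu> = length (tends T)" using ew by (auto simp: end_weights_def)
  have ends: "tends T \<noteq> []" using ew \<mu>ne by (auto simp: end_weights_def)
  then have R1: "1 \<le> size \<mu>" using R by (cases "tends T") auto
  have cnt: "3 * tnv T = 2 * length (tedges T) + length (tends T)" by (rule count_vertices[OF wf tri])
  have g: "int g = 1 - int (tnv T) + int (length (tedges T))" using gen unfolding genus_def by simp
  have "int (size \<mu> + g - 1 + n) = int (size \<mu>) + int g - 1 + int n" using R1 by (simp add: of_nat_diff)
  moreover have "int (3 * tnv T) = int (2 * length (tedges T) + length (tends T))" using cnt by simp
  ultimately have "int (size \<mu> + g - 1 + n) + 2 * int (length (tedges T)) = int (ncoord T)"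
    using g R nm unfolding ncoord_def by simp
  then have dN: "(size \<mu> + g - 1 + n) + 2 * length (tedges T) = ncoord T" by linarith
  obtain X0 where X0: "X0 \<in> cell \<delta> l a T" using ne by blast
  show ?thesis unfolding has_aff_dim_def
    using lower_cell[OF wf bal l X0 dN] upper[OF wf bal tri im ends dN] by blast
qed

lemma aff_dim_unique:
  assumes "has_aff_dim S d" "has_aff_dim S d'" shows "d' \<le> d"
proof (rule ccontr)
  assume "\<not> d' \<le> d"
  then have "Suc d \<le> d'" by simp
  from assms(2) obtain x where x: "\<forall>i\<le>d'. x i \<in> S" "aff_indep_fam x d'" unfolding has_aff_dim_def by blast
  have "\<forall>i\<le>Suc d. x i \<in> S" using x(1) \<open>Suc d \<le> d'\<close> by simp
  moreover have "aff_indep_fam x (Suc d)" by (rule aff_indep_mono[OF x(2) \<open>Suc d \<le> d'\<close>])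
  ultimately show False using assms(1) unfolding has_aff_dim_def by blast
qed

theorem proposition2p12:
  fixes \<delta> :: int and l a b :: real and g n :: nat and \<mu> :: "nat multiset"
  assumes "\<delta> \<in> {0, 1}"
    and "0 < l"
    and "2 * a \<in> \<int>" and "2 * b \<in> \<int>"
    and "\<exists>k::int. 2 * b - 2 * of_int \<delta> * a = 2 * of_int k"
    and "\<mu> \<noteq> {#}" and "\<forall>i \<in># \<mu>. 1 \<le> i"
    and "real (sum_mset \<mu>) = 2 * b"
  shows "simple_locus_nonempty \<delta> l g n a b \<mu> \<longrightarrow>
         simple_locus_has_dim \<delta> l g n a b \<mu> (size \<mu> + g - 1 + n)"
proof
  assume "simple_locus_nonempty \<delta> l g n a b \<mu>"
  then obtain T0 where T0: "simple_type \<delta> g n b \<mu> T0" "cell \<delta> l a T0 \<noteq> {}"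
    unfolding simple_locus_nonempty_def by blast
  have "has_aff_dim (cell \<delta> l a T0) (size \<mu> + g - 1 + n)"
    by (rule dim_cell[OF T0(1) assms(6) assms(2) T0(2)])
  moreover have "d' \<le> size \<mu> + g - 1 + n"
    if "simple_type \<delta> g n b \<mu> T" "has_aff_dim (cell \<delta> l a T) d'" for T d'
  proof -
    have "cell \<delta> l a T \<noteq> {}" using that(2) unfolding has_aff_dim_def by blast
    then have "has_aff_dim (cell \<delta> l a T) (size \<mu> + g - 1 + n)"
      by (rule dim_cell[OF that(1) assms(6) assms(2)])
    then show ?thesis using aff_dim_unique that(2) by blast
  qed
  ultimately show "simple_locus_has_dim \<delta> l g n a b \<mu> (size \<mu> + g - 1 + n)"
    unfolding simple_locus_has_dim_def using T0(1) by blast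
qed

end
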